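(* Let $\ell=1$, $e>1$, and the charge $s_1=0$. For $n\ge1$ let $C_{0,n}=\sigma_{1-n}\cdots\sigma_{-1}\sigma_0$ (indices read modulo $e$, the rightmost factor applied first) and let $\nu_n$ be the partition whose transpose is $(n,\,n-(e-1),\,n-2(e-1),\dots)$ (positive terms only). Then for every singular partition $\lambda$ we have $C_{0,n}\lambda=\lambda+\nu_n$, and for every cosingular partition $\mu$ we have $C^*_{0,n}\mu=(\mu^t+\nu_n^t)^t$, where $+$ denotes componentwise (row by row) sum of partitions and $t$ denotes transposition.
   Context: Boxes of a partition are pairs $b=(x,y)$ (row $x$, column $y$) with content $\mathrm{cont}(b)=y-x$; $b$ is an $i$-box ($i\in\mathbb{Z}/e\mathbb{Z}$) if $\mathrm{cont}(b)\equiv i\pmod e$. Addable/removable boxes are as usual. The $i$-signature of $\lambda$ lists the addable ($+$) and removable ($-$) $i$-boxes in decreasing order of content. Usual crystal: reduce the signature by repeatedly deleting a $-$ immediately followed by a $+$; remaining sets $I_+$ (all before) and $I_-$; $\tilde f_i$ adds the box of the last element of $I_+$, $\tilde e_i$ removes the box of the first element of $I_-$ (giving $0$ if the set is empty); $\lambda$ is singular if $\tilde e_i\lambda=0$ for all $i$; if $I_-=\varnothing$ set $\sigma_i\lambda=\tilde f_i^{|I_+|}\lambda$. Dual crystal: reduce instead by repeatedly deleting a $+$ immediately followed by a $-$, obtaining $I^*_+$ (all after) and $I^*_-$; $\tilde f^*_i$ adds the box of the first element of $I^*_+$, $\tilde e^*_i$ removes the box of the last element of $I^*_-$; $\mu$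 is cosingular if $\tilde e^*_i\mu=0$ for all $i$; if $I^*_-=\varnothing$ set $\sigma^*_i\mu=(\tilde f^*_i)^{|I^*_+|}\mu$. Then $C_{0,n}\lambda=\sigma_{1-n}\cdots\sigma_0\lambda$ and $C^*_{0,n}\mu=\sigma^*_{1-n}\cdots\sigma^*_0\mu$. *)

theory Defs
  imports Main
begin

text \<open>Partitions are weakly decreasing lists of positive naturals (rows, top to bottom).
 Rows and columns are indexed from 1; the box (x,y) lies in row x, column y.
 Level one (\<ell> = 1) with charge s_1 = 0: the content of (x,y) is y - x.\<close>

definition is_partition :: "nat list \<Rightarrow> bool" where
  "is_partition lam \<longleftrightarrow> sorted_wrt (\<ge>) lam \<and> 0 \<notin> set lam"

definition rowlen :: "nat list \<Rightarrow> nat \<Rightarrow> nat" where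
  "rowlen lam x = (if 1 \<le> x \<and> x \<le> length lam then lam ! (x - 1) else 0)"

definition content :: "nat \<times> nat \<Rightarrow> int" where
  "content b = int (snd b) - int (fst b)"

definition addable_row :: "nat list \<Rightarrow> nat \<Rightarrow> bool" where
  "addable_row lam x \<longleftrightarrow> 1 \<le> x \<and> x \<le> length lam + 1 \<and> (x = 1 \<or> rowlen lam x < rowlen lam (x - 1))"

definition removable_row :: "nat list \<Rightarrow> nat \<Rightarrow> bool" where
  "removable_row lam x \<longleftrightarrow> 1 \<le> x \<and> x \<le> length lam \<and> rowlen lam (x + 1) < rowlen lam x"

text \<open>All addable (True = +) and removable (False = -) boxes, each tagged with its sign.\<close>
definition ar_boxes :: "nat list \<Rightarrow> (bool \<times> (nat \<times> nat)) list" where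
  "ar_boxes lam = concat (map (\<lambda>x.
      (if addable_row lam x then [(True, (x, rowlen lam x + 1))] else []) @
      (if removable_row lam x then [(False, (x, rowlen lam x))] else []))
     [1..<length lam + 2])"

definition isig :: "nat \<Rightarrow> int \<Rightarrow> nat list \<Rightarrow> (bool \<times> (nat \<times> nat)) list" where
  "isig e i lam = sort_key (\<lambda>sb. - content (snd sb))
      (filter (\<lambda>sb. content (snd sb) mod int e = i mod int e) (ar_boxes lam))"

text \<open>Delete the first adjacent pair whose signs are (s, not s), if any.
 s = False: delete "-+" (usual crystal); s = True: delete "+-" (dual crystal).\<close>
fun del_pair :: "bool \<Rightarrow> (bool \<times> 'a) list \<Rightarrow> (bool \<times> 'a) list" where
  "del_pair s (a # b # xs) = (if fst a = s \<and> fst b = (\<not> s) then xs else a # del_pair s (b # xs))"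
| "del_pair s xs = xs"

text \<open>Repeated deletion; length xs iterations suffice to reach the fixed point.\<close>
definition reduce :: "bool \<Rightarrow> (bool \<times> 'a) list \<Rightarrow> (bool \<times> 'a) list" where
  "reduce s xs = (del_pair s ^^ length xs) xs"

definition Iplus :: "nat \<Rightarrow> int \<Rightarrow> nat list \<Rightarrow> (nat \<times> nat) list" where
  "Iplus e i lam = map snd (filter fst (reduce False (isig e i lam)))"
definition Iminus :: "nat \<Rightarrow> int \<Rightarrow> nat list \<Rightarrow> (nat \<times> nat) list" where
  "Iminus e i lam = map snd (filter (Not \<circ> fst) (reduce False (isig e i lam)))"
definition Iplus_dual :: "nat \<Rightarrow> int \<Rightarrow> nat list \<Rightarrow> (nat \<times> nat) list" where
  "Iplus_dual e i lam = map snd (filter fst (reduce True (isig e i lam)))"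
definition Iminus_dual :: "nat \<Rightarrow> int \<Rightarrow> nat list \<Rightarrow> (nat \<times> nat) list" where
  "Iminus_dual e i lam = map snd (filter (Not \<circ> fst) (reduce True (isig e i lam)))"

definition add_box :: "nat list \<Rightarrow> nat \<times> nat \<Rightarrow> nat list" where
  "add_box lam b = (if fst b = length lam + 1 then lam @ [1]
                    else lam[fst b - 1 := lam ! (fst b - 1) + 1])"
definition remove_box :: "nat list \<Rightarrow> nat \<times> nat \<Rightarrow> nat list" where
  "remove_box lam b = filter (\<lambda>v. v \<noteq> 0) (lam[fst b - 1 := lam ! (fst b - 1) - 1])"

text \<open>Crystal operators; None plays the role of 0.\<close>
definition f_op :: "nat \<Rightarrow> int \<Rightarrow> nat list \<Rightarrow> nat list option" where
  "f_op e i lam = (if Iplus e i lam = [] then None else Some (add_box lam (last (Iplus e i lam))))"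
definition e_op :: "nat \<Rightarrow> int \<Rightarrow> nat list \<Rightarrow> nat list option" where
  "e_op e i lam = (if Iminus e i lam = [] then None else Some (remove_box lam (hd (Iminus e i lam))))"
definition f_dual :: "nat \<Rightarrow> int \<Rightarrow> nat list \<Rightarrow> nat list option" where
  "f_dual e i lam = (if Iplus_dual e i lam = [] then None else Some (add_box lam (hd (Iplus_dual e i lam))))"
definition e_dual :: "nat \<Rightarrow> int \<Rightarrow> nat list \<Rightarrow> nat list option" where
  "e_dual e i lam = (if Iminus_dual e i lam = [] then None else Some (remove_box lam (last (Iminus_dual e i lam))))"

definition singular :: "nat \<Rightarrow> nat list \<Rightarrow> bool" where
  "singular e lam \<longleftrightarrow> (\<forall>i. e_op e i lam = None)"
definition cosingular :: "nat \<Rightarrow> nat list \<Rightarrow> bool" where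
  "cosingular e lam \<longleftrightarrow> (\<forall>i. e_dual e i lam = None)"

fun opow :: "(nat list \<Rightarrow> nat list option) \<Rightarrow> nat \<Rightarrow> nat list \<Rightarrow> nat list option" where
  "opow F 0 lam = Some lam"
| "opow F (Suc k) lam = Option.bind (opow F k lam) F"

definition sigma :: "nat \<Rightarrow> int \<Rightarrow> nat list \<Rightarrow> nat list option" where
  "sigma e i lam = (if Iminus e i lam = [] then opow (f_op e i) (length (Iplus e i lam)) lam else None)"
definition sigma_dual :: "nat \<Rightarrow> int \<Rightarrow> nat list \<Rightarrow> nat list option" where
  "sigma_dual e i lam = (if Iminus_dual e i lam = [] then opow (f_dual e i) (length (Iplus_dual e i lam)) lam else None)"

text \<open>C_{0,n} = \<sigma>_{1-n} ... \<sigma>_{-1} \<sigma>_0, rightmost applied first.\<close>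
definition C0 :: "nat \<Rightarrow> nat \<Rightarrow> nat list \<Rightarrow> nat list option" where
  "C0 e n lam = fold (\<lambda>k acc. Option.bind acc (sigma e (- int k))) [0..<n] (Some lam)"
definition C0_dual :: "nat \<Rightarrow> nat \<Rightarrow> nat list \<Rightarrow> nat list option" where
  "C0_dual e n lam = fold (\<lambda>k acc. Option.bind acc (sigma_dual e (- int k))) [0..<n] (Some lam)"

definition ptranspose :: "nat list \<Rightarrow> nat list" where
  "ptranspose lam = map (\<lambda>j. length (filter (\<lambda>v. j \<le> v) lam)) [1..<foldr max lam 0 + 1]"

definition padd :: "nat list \<Rightarrow> nat list \<Rightarrow> nat list" where
  "padd lam mu = map (\<lambda>x. rowlen lam x + rowlen mu x) [1..<max (length lam) (length mu) + 1]"

definition nu :: "nat \<Rightarrow> nat \<Rightarrow> nat list" where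
  "nu e n = ptranspose (filter (\<lambda>v. 0 < v) (map (\<lambda>k. n - k * (e - 1)) [0..<n]))"

end

theory Submission
  imports Defs
begin


definition step :: "bool \<Rightarrow> (bool \<times> 'a) list \<Rightarrow> (bool \<times> 'a) \<Rightarrow> (bool \<times> 'a) list" where
  "step s acc a = (if fst a = (\<not> s) \<and> acc \<noteq> [] \<and> fst (last acc) = s then butlast acc else acc @ [a])"

definition red :: "bool \<Rightarrow> (bool \<times> 'a) list \<Rightarrow> (bool \<times> 'a) list" where
  "red s xs = foldl (step s) [] xs"

definition noadj :: "bool \<Rightarrow> (bool \<times> 'a) list \<Rightarrow> bool" where
  "noadj s xs \<longleftrightarrow> (\<forall>u a b v. xs = u @ a # b # v \<longrightarrow> \<not> (fst a = s \<and> fst b = (\<not> s)))"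

lemma del_pair_cases:
  "del_pair s xs = xs \<and> noadj s xs \<or>
   (\<exists>u a b v. xs = u @ a # b # v \<and> fst a = s \<and> fst b = (\<not> s) \<and> del_pair s xs = u @ v)"
proof (induction s xs rule: del_pair.induct)
  case (1 s a b xs)
  show ?case
  proof (cases "fst a = s \<and> fst b = (\<not> s)")
    case True
    then show ?thesis by (intro disjI2 exI[of _ "[]"]) auto
  next
    case False
    from "1"[OF False] show ?thesis
    proof
      assume h: "del_pair s (b # xs) = b # xs \<and> noadj s (b # xs)"
      have "noadj s (a # b # xs)"
        unfolding noadj_def
      proof (intro allI impI)
        fix u c d v assume eq: "a # b # xs = u @ c # d # v"
        show "\<not> (fst c = s \<and> fst d = (\<not> s))"
        proof (cases u)
          case Nil then show ?thesis using eq False by auto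
        next
          case (Cons w u') then have "b # xs = u' @ c # d # v" using eq by auto
          then show ?thesis using h unfolding noadj_def by blast
        qed
      qed
      then show ?thesis using h False by auto
    next
      assume "\<exists>u c d v. b # xs = u @ c # d # v \<and> fst c = s \<and> fst d = (\<not> s) \<and> del_pair s (b # xs) = u @ v"
      then obtain u c d v where "b # xs = u @ c # d # v" "fst c = s" "fst d = (\<not> s)" "del_pair s (b # xs) = u @ v"
        by blast
      moreover have "del_pair s (a # b # xs) = a # del_pair s (b # xs)"
        by (subst del_pair.simps(1)) (rule if_not_P[OF False])
      ultimately show ?thesis using False
        by (intro disjI2 exI[of _ "a # u"] exI[of _ c] exI[of _ d] exI[of _ v]) simp
    qed
  qed
next
  case ("2_1" s) then show ?case by (auto simp: noadj_def)
next
  case ("2_2" s v) then show ?case by (auto simp: noadj_def Cons_eq_append_conv)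
qed

lemma red_del: "fst a = s \<Longrightarrow> fst b = (\<not> s) \<Longrightarrow> red s (u @ a # b # v) = red s (u @ v)"
  by (simp add: red_def step_def)

lemma red_noadj: "noadj s xs \<Longrightarrow> red s xs = xs"
proof (induction xs rule: rev_induct)
  case Nil then show ?case by (simp add: red_def)
next
  case (snoc a xs)
  have n: "noadj s xs" using snoc.prems unfolding noadj_def by force
  have "\<not> (fst a = (\<not> s) \<and> xs \<noteq> [] \<and> fst (last xs) = s)"
  proof
    assume h: "fst a = (\<not> s) \<and> xs \<noteq> [] \<and> fst (last xs) = s"
    then have "xs @ [a] = butlast xs @ last xs # a # []" by simp
    with snoc.prems h show False unfolding noadj_def by blast
  qed
  then have "step s xs a = xs @ [a]" unfolding step_def by (rule if_not_P)
  then show ?case using snoc.IH[OF n] by (simp add: red_def)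
qed

lemma del_pair_len: "length (del_pair s xs) \<le> length xs"
  by (induction s xs rule: del_pair.induct) auto

lemma red_funpow: "red s ((del_pair s ^^ k) xs) = red s xs"
proof (induction k)
  case (Suc k)
  have "red s (del_pair s ((del_pair s ^^ k) xs)) = red s ((del_pair s ^^ k) xs)"
  proof -
    from del_pair_cases[of s "(del_pair s ^^ k) xs"] show ?thesis
    proof
      assume "\<exists>u a b v. (del_pair s ^^ k) xs = u @ a # b # v \<and> fst a = s \<and> fst b = (\<not> s) \<and> del_pair s ((del_pair s ^^ k) xs) = u @ v"
      then obtain u a b v where "(del_pair s ^^ k) xs = u @ a # b # v" "fst a = s" "fst b = (\<not> s)" "del_pair s ((del_pair s ^^ k) xs) = u @ v" by blast
      then show ?thesis using red_del by metis
    qed simp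
  qed
  then show ?case using Suc by simp
qed simp

lemma funpow_fix: "f x = x \<Longrightarrow> (f ^^ k) x = x"
  by (induction k) auto

lemma funpow_noadj: "length xs \<le> k \<Longrightarrow> noadj s ((del_pair s ^^ k) xs)"
proof (induction k arbitrary: xs)
  case 0 then show ?case by (simp add: noadj_def)
next
  case (Suc k)
  have e: "(del_pair s ^^ Suc k) xs = (del_pair s ^^ k) (del_pair s xs)"
    by (simp add: funpow_Suc_right del: funpow.simps)
  from del_pair_cases[of s xs] show ?case
  proof
    assume h: "del_pair s xs = xs \<and> noadj s xs"
    then show ?thesis using funpow_fix[of "del_pair s" xs] by (simp add: funpow_Suc_right del: funpow.simps)
  next
    assume "\<exists>u a b v. xs = u @ a # b # v \<and> fst a = s \<and> fst b = (\<not> s) \<and> del_pair s xs = u @ v"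
    then have "length (del_pair s xs) \<le> k" using Suc.prems by auto
    then show ?thesis using Suc.IH e by simp
  qed
qed

lemma reduce_red: "reduce s xs = red s xs"
  unfolding reduce_def using red_funpow[of s "length xs" xs] red_noadj[OF funpow_noadj[of xs "length xs" s]]
  by simp



abbreviation R :: "nat list \<Rightarrow> nat \<Rightarrow> nat" where "R \<equiv> rowlen"

lemma rowlen_0[simp]: "rowlen k 0 = 0" by (simp add: rowlen_def)
lemma rowlen_big: "length k < x \<Longrightarrow> rowlen k x = 0" by (simp add: rowlen_def)
lemma rowlen_nth: "1 \<le> x \<Longrightarrow> x \<le> length k \<Longrightarrow> rowlen k x = k ! (x - 1)" by (simp add: rowlen_def)

lemma addable_iff: "addable_row k x \<longleftrightarrow> 1 \<le> x \<and> (x = 1 \<or> R k x < R k (x - 1))"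
  unfolding addable_row_def by (auto simp: rowlen_def split: if_splits)

lemma removable_iff: "removable_row k x \<longleftrightarrow> 1 \<le> x \<and> R k (x + 1) < R k x"
  unfolding removable_row_def by (auto simp: rowlen_def split: if_splits)

lemma part_mono:
  assumes "is_partition k" "1 \<le> x" "x \<le> y" shows "R k y \<le> R k x"
proof (cases "y \<le> length k")
  case True
  then show ?thesis using assms unfolding is_partition_def rowlen_def
    by (cases "x = y") (auto simp: sorted_wrt_iff_nth_less)
next
  case False then show ?thesis by (simp add: rowlen_big)
qed

lemma part_pos: "is_partition k \<Longrightarrow> 1 \<le> x \<Longrightarrow> x \<le> length k \<Longrightarrow> 0 < R k x"
proof -
  assume a: "is_partition k" "1 \<le> x" "x \<le> length k"
  then have "k ! (x - 1) \<in> set k" by (intro nth_mem) simp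
  moreover have "0 \<notin> set k" using a(1) by (simp add: is_partition_def)
  ultimately have "k ! (x - 1) \<noteq> 0" by metis
  then show ?thesis using a by (simp add: rowlen_def)
qed

lemma part_intro:
  assumes "\<And>x. 1 \<le> x \<Longrightarrow> R k (x + 1) \<le> R k x"
    and "\<And>x. 1 \<le> x \<Longrightarrow> x \<le> length k \<Longrightarrow> 0 < R k x"
  shows "is_partition k"
  unfolding is_partition_def
proof
  have t: "transp (\<lambda>a b::nat. b \<le> a)" by (auto simp: transp_def)
  show "sorted_wrt (\<lambda>a b. b \<le> a) k"
    unfolding sorted_wrt_iff_nth_Suc_transp[OF t]
  proof (intro allI impI)
    fix i assume "Suc i < length k"
    then show "k ! Suc i \<le> k ! i" using assms(1)[of "Suc i"] by (simp add: rowlen_def)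
  qed
  show "0 \<notin> set k"
  proof
    assume "0 \<in> set k"
    then obtain j where "j < length k" "k ! j = 0" by (metis in_set_conv_nth)
    then show False using assms(2)[of "Suc j"] by (simp add: rowlen_def)
  qed
qed

lemma part_eq:
  assumes "is_partition a" "is_partition b" "\<And>x. 1 \<le> x \<Longrightarrow> R a x = R b x"
  shows "a = b"
proof -
  have "length a = length b"
  proof (rule ccontr)
    assume "length a \<noteq> length b"
    then consider "length a < length b" | "length b < length a" by linarith
    then show False
    proof cases
      case 1
      then show False using part_pos[OF assms(2), of "length b"] rowlen_big[OF 1] assms(3)[of "length b"]
        by simp
    next
      case 2
      then show False using part_pos[OF assms(1), of "length a"] rowlen_big[OF 2] assms(3)[of "length a"]
        by simp
    qed
  qed
  moreover have "\<And>i. i < length a \<Longrightarrow> a ! i = b ! i"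
  proof -
    fix i assume i: "i < length a"
    have "R a (Suc i) = R b (Suc i)" using assms(3) by simp
    then show "a ! i = b ! i" using i calculation by (simp add: rowlen_def)
  qed
  ultimately show ?thesis by (simp add: nth_equalityI)
qed

definition addE :: "nat list \<Rightarrow> nat \<Rightarrow> (bool \<times> (nat \<times> nat)) list" where
  "addE k x = (if addable_row k x then [(True, (x, R k x + 1))] else [])"
definition remE :: "nat list \<Rightarrow> nat \<Rightarrow> (bool \<times> (nat \<times> nat)) list" where
  "remE k x = (if removable_row k x then [(False, (x, R k x))] else [])"
definition rowE :: "nat list \<Rightarrow> nat \<Rightarrow> (bool \<times> (nat \<times> nat)) list" where
  "rowE k x = addE k x @ remE k x"
definition gapE :: "nat list \<Rightarrow> nat \<Rightarrow> (bool \<times> (nat \<times> nat)) list" where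
  "gapE k y = remE k y @ addE k (y + 1)"

lemma ar_def2: "ar_boxes k = concat (map (rowE k) [1..<length k + 2])"
  unfolding ar_boxes_def rowE_def addE_def remE_def by simp

lemma rowE_big: "length k + 2 \<le> x \<Longrightarrow> rowE k x = []"
  unfolding rowE_def addE_def remE_def addable_iff removable_iff by (simp add: rowlen_big)

lemma gapE_big: "length k + 1 \<le> y \<Longrightarrow> gapE k y = []"
  unfolding gapE_def addE_def remE_def addable_iff removable_iff by (simp add: rowlen_big)

lemma concat_map_empty: "(\<And>x. x \<in> set xs \<Longrightarrow> f x = []) \<Longrightarrow> concat (map f xs) = []"
  by (induction xs) auto

lemma ar_rows: assumes "length k + 2 \<le> M" shows "ar_boxes k = concat (map (rowE k) [1..<M])"
proof -
  have "[1..<M] = [1..<length k + 2] @ [length k + 2..<M]"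
  proof -
    obtain d where "M = length k + 2 + d" using assms le_Suc_ex by blast
    then show ?thesis using upt_add_eq_append[of 1 "length k + 2" d] by (simp del: upt_Suc)
  qed
  moreover have "concat (map (rowE k) [length k + 2..<M]) = []"
    by (rule concat_map_empty) (simp add: rowE_big)
  ultimately show ?thesis unfolding ar_def2 by (simp del: upt_Suc)
qed

lemma concat_shift:
  "concat (map (\<lambda>x. a x @ b x) [1..<m + 2]) = a 1 @ concat (map (\<lambda>y. b y @ a (y + 1)) [1..<m + 1]) @ b (m + 1)"
proof (induction m)
  case 0 then show ?case by simp
next
  case (Suc m)
  have "concat (map (\<lambda>x. a x @ b x) [1..<Suc m + 2]) = concat (map (\<lambda>x. a x @ b x) [1..<m + 2]) @ a (m + 2) @ b (m + 2)"
    by simp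
  also have "\<dots> = a 1 @ concat (map (\<lambda>y. b y @ a (y + 1)) [1..<m + 1]) @ b (m + 1) @ a (m + 2) @ b (m + 2)"
    using Suc by simp
  also have "\<dots> = a 1 @ concat (map (\<lambda>y. b y @ a (y + 1)) [1..<Suc m + 1]) @ b (Suc m + 1)"
    by (simp add: numeral_2_eq_2)
  finally show ?case .
qed

lemma ar_gaps: assumes "length k + 1 \<le> M" shows "ar_boxes k = concat (map (gapE k) [0..<M])"
proof -
  have r0: "remE k 0 = []" by (simp add: remE_def removable_iff)
  have rl: "remE k (length k + 1) = []" by (simp add: remE_def removable_iff rowlen_big)
  have "ar_boxes k = addE k 1 @ concat (map (gapE k) [1..<length k + 1])"
    using concat_shift[of "addE k" "remE k" "length k"] rl
    unfolding ar_def2 rowE_def gapE_def by (simp del: upt_Suc)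
  also have "\<dots> = concat (map (gapE k) [0..<length k + 1])"
    by (simp add: upt_rec[of 0] gapE_def r0 del: upt_Suc)
  also have "\<dots> = concat (map (gapE k) [0..<M])"
  proof -
    have "[0..<M] = [0..<length k + 1] @ [length k + 1..<M]"
    proof -
      obtain d where "M = length k + 1 + d" using assms le_Suc_ex by blast
      then show ?thesis using upt_add_eq_append[of 0 "length k + 1" d] by (simp del: upt_Suc)
    qed
    moreover have "concat (map (gapE k) [length k + 1..<M]) = []"
      by (rule concat_map_empty) (simp add: gapE_big)
    ultimately show ?thesis by (simp del: upt_Suc)
  qed
  finally show ?thesis .
qed

lemma mem_ar: "sb \<in> set (ar_boxes k) \<longleftrightarrow>
   (\<exists>x. sb = (True, (x, R k x + 1)) \<and> addable_row k x) \<or> (\<exists>x. sb = (False, (x, R k x)) \<and> removable_row k x)"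
proof -
  have "sb \<in> set (ar_boxes k) \<longleftrightarrow> (\<exists>x. 1 \<le> x \<and> x < length k + 2 \<and> sb \<in> set (rowE k x))"
    unfolding ar_def2 by (auto simp del: upt_Suc)
  also have "\<dots> \<longleftrightarrow> (\<exists>x. sb = (True, (x, R k x + 1)) \<and> addable_row k x) \<or> (\<exists>x. sb = (False, (x, R k x)) \<and> removable_row k x)"
    unfolding rowE_def addE_def remE_def
    by (auto simp: addable_row_def removable_row_def split: if_splits)
  finally show ?thesis .
qed

lemma mem_ar_True: "(True, b) \<in> set (ar_boxes k) \<longleftrightarrow> (\<exists>x. b = (x, R k x + 1) \<and> addable_row k x)"
  using mem_ar by auto

lemma mem_ar_False: "(False, b) \<in> set (ar_boxes k) \<longleftrightarrow> (\<exists>x. b = (x, R k x) \<and> removable_row k x)"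
  using mem_ar by auto

definition cgt :: "(bool \<times> (nat \<times> nat)) \<Rightarrow> (bool \<times> (nat \<times> nat)) \<Rightarrow> bool" where
  "cgt a b \<longleftrightarrow> content (snd b) < content (snd a)"

lemma rowE_lt:
  assumes "is_partition k" "1 \<le> y" "y < y'" "a \<in> set (rowE k y)" "b \<in> set (rowE k y')"
  shows "cgt a b"
proof -
  have m1: "R k y' \<le> R k (y + 1)" using part_mono[OF assms(1), of "y + 1" y'] assms by simp
  have m2: "R k (y + 1) \<le> R k y" using part_mono[OF assms(1), of y "y + 1"] assms by simp
  have cb: "content (snd b) \<le> int (R k (y + 1)) - int y"
    using assms(5) m1 assms(3) by (auto simp: rowE_def addE_def remE_def content_def split: if_splits)
  have ca: "int (R k (y + 1)) - int y < content (snd a)"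
    using assms(4) m2 by (auto simp: rowE_def addE_def remE_def content_def removable_iff split: if_splits)
  show ?thesis using ca cb by (simp add: cgt_def)
qed

lemma rowE_sorted: "sorted_wrt cgt (rowE k y)"
  by (simp add: rowE_def addE_def remE_def cgt_def content_def)

lemma sorted_rows:
  assumes "is_partition k" shows "sorted_wrt cgt (concat (map (rowE k) [1..<M]))"
proof (induction M)
  case 0 then show ?case by simp
next
  case (Suc M)
  show ?case
  proof (cases "1 \<le> M")
    case True
    then have "concat (map (rowE k) [1..<Suc M]) = concat (map (rowE k) [1..<M]) @ rowE k M" by simp
    moreover have "\<forall>a\<in>set (concat (map (rowE k) [1..<M])). \<forall>b\<in>set (rowE k M). cgt a b"
      using rowE_lt[OF assms] by (auto simp del: upt_Suc)
    ultimately show ?thesis using Suc rowE_sorted[of k M]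
      by (simp add: sorted_wrt_append del: upt_Suc)
  next
    case False then show ?thesis by simp
  qed
qed

lemma ar_sorted: "is_partition k \<Longrightarrow> sorted_wrt cgt (ar_boxes k)"
  unfolding ar_def2 by (rule sorted_rows)

lemma sorted_cgt_distinct: "sorted_wrt cgt xs \<Longrightarrow> distinct xs"
  by (induction xs) (auto simp: cgt_def)

lemma ar_distinct: "is_partition k \<Longrightarrow> distinct (ar_boxes k)"
proof -
  assume p: "is_partition k"
  show ?thesis using ar_sorted[OF p] sorted_cgt_distinct by blast
qed

definition resP :: "nat \<Rightarrow> int \<Rightarrow> (bool \<times> (nat \<times> nat)) \<Rightarrow> bool" where
  "resP e i sb \<longleftrightarrow> content (snd sb) mod int e = i mod int e"

lemma isig_filter: "is_partition k \<Longrightarrow> isig e i k = filter (resP e i) (ar_boxes k)"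
proof -
  assume p: "is_partition k"
  have "sorted_wrt cgt (filter (resP e i) (ar_boxes k))"
    using ar_sorted[OF p] by (simp add: sorted_wrt_filter)
  then have "sorted_wrt (\<lambda>a b. - content (snd a) \<le> - content (snd b)) (filter (resP e i) (ar_boxes k))"
    by (rule sorted_wrt_mono_rel[rotated]) (auto simp: cgt_def)
  then have "sorted (map (\<lambda>sb. - content (snd sb)) (filter (resP e i) (ar_boxes k)))"
    by (simp add: sorted_wrt_map)
  then show ?thesis unfolding isig_def resP_def[abs_def]
    by (simp add: sort_key_id_if_sorted)
qed

lemma isig_sorted: "is_partition k \<Longrightarrow> sorted_wrt cgt (isig e i k)"
  using ar_sorted by (simp add: isig_filter sorted_wrt_filter)

lemma isig_distinct: "is_partition k \<Longrightarrow> distinct (isig e i k)"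
  using ar_distinct by (simp add: isig_filter)

lemma isig_gaps: "is_partition k \<Longrightarrow> length k + 1 \<le> M \<Longrightarrow>
   isig e i k = concat (map (\<lambda>y. filter (resP e i) (gapE k y)) [0..<M])"
  by (simp add: isig_filter ar_gaps filter_concat comp_def)

lemma isig_rows: "is_partition k \<Longrightarrow> length k + 2 \<le> M \<Longrightarrow>
   isig e i k = concat (map (\<lambda>y. filter (resP e i) (rowE k y)) [1..<M])"
  by (simp add: isig_filter ar_rows filter_concat comp_def)



lemma mod_neighbors:
  fixes c i :: int assumes "1 < e" "c mod e = i mod e"
  shows "(c + 1) mod e \<noteq> i mod e" "(c - 1) mod e \<noteq> i mod e"
proof -
  show "(c + 1) mod e \<noteq> i mod e"
  proof
    assume "(c + 1) mod e = i mod e"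
    then have "(c + 1) mod e = c mod e" using assms by simp
    then have "e dvd (c + 1) - c" by (simp only: mod_eq_dvd_iff)
    then have "e dvd 1" by simp
    then show False using assms by (simp add: zdvd_not_zless)
  qed
  show "(c - 1) mod e \<noteq> i mod e"
  proof
    assume "(c - 1) mod e = i mod e"
    then have "(c - 1) mod e = c mod e" using assms by simp
    then have "e dvd (c - 1) - c" by (simp only: mod_eq_dvd_iff)
    then have "e dvd 1" by (simp add: dvd_neg_div)
    then show False using assms by (simp add: zdvd_not_zless)
  qed
qed

lemma rowlen_add_box:
  assumes "1 \<le> x" "x \<le> length k + 1"
  shows "R (add_box k (x, c)) y = R k y + (if y = x then 1 else 0)"
proof (cases "x = length k + 1")
  case True
  then show ?thesis unfolding add_box_def rowlen_def by (auto simp: nth_append)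
next
  case False
  then show ?thesis using assms unfolding add_box_def rowlen_def by auto
qed

lemma length_add_box:
  assumes "1 \<le> x" "x \<le> length k + 1"
  shows "length (add_box k (x, c)) = (if x = length k + 1 then length k + 1 else length k)"
  unfolding add_box_def by auto

lemma add_box_partition:
  assumes p: "is_partition k" and a: "addable_row k x"
  shows "is_partition (add_box k (x, c))"
proof -
  have x: "1 \<le> x" "x \<le> length k + 1" using a by (auto simp: addable_row_def)
  note rl = rowlen_add_box[OF x, of c]
  show ?thesis
  proof (rule part_intro)
    fix y :: nat assume y: "1 \<le> y"
    show "R (add_box k (x, c)) (y + 1) \<le> R (add_box k (x, c)) y"
    proof (cases "y + 1 = x")
      case True
      then have "R k x < R k y" using a y by (auto simp: addable_iff)
      then show ?thesis using True rl by simp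
    next
      case False
      then show ?thesis using part_mono[OF p y, of "y + 1"] rl by auto
    qed
  next
    fix y :: nat assume y: "1 \<le> y" "y \<le> length (add_box k (x, c))"
    show "0 < R (add_box k (x, c)) y"
    proof (cases "y \<le> length k")
      case True then show ?thesis using part_pos[OF p y(1) True] rl by simp
    next
      case False
      then have "y = x" using y length_add_box[OF x, of c] by (auto split: if_splits)
      then show ?thesis using rl by simp
    qed
  qed
qed

lemma rowE_same:
  assumes "R k' (y - 1) = R k (y - 1)" "R k' y = R k y" "R k' (y + 1) = R k (y + 1)"
  shows "rowE k' y = rowE k y"
  unfolding rowE_def addE_def remE_def addable_iff removable_iff assms by (rule refl)

lemma resP_content: "resP e i (s, b) \<longleftrightarrow> content b mod int e = i mod int e"
  by (simp add: resP_def)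

lemma flip:
  assumes p: "is_partition k" and e: "1 < e" and mem: "(True, b) \<in> set (isig e i k)"
  shows "is_partition (add_box k b)"
    "\<And>y. R (add_box k b) y = R k y + (if y = fst b then 1 else 0)"
    "\<And>A B. isig e i k = A @ (True, b) # B \<Longrightarrow> isig e i (add_box k b) = A @ (False, b) # B"
proof -
  have m1: "(True, b) \<in> set (ar_boxes k)" and rb: "resP e i (True, b)"
    using mem by (auto simp: isig_filter[OF p])
  obtain x where bx: "b = (x, R k x + 1)" and a: "addable_row k x"
    using m1 mem_ar_True by blast
  have x: "1 \<le> x" "x \<le> length k + 1" using a by (auto simp: addable_row_def)
  define k' where "k' = add_box k b"
  have p': "is_partition k'" unfolding k'_def bx by (rule add_box_partition[OF p a])
  then show "is_partition (add_box k b)" by (simp add: k'_def)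
  have rl: "\<And>y. R k' y = R k y + (if y = x then 1 else 0)"
    unfolding k'_def bx by (rule rowlen_add_box[OF x])
  then show "\<And>y. R (add_box k b) y = R k y + (if y = fst b then 1 else 0)" by (simp add: k'_def bx)
  have lk': "length k' \<le> length k + 1" unfolding k'_def bx using length_add_box[OF x] by simp
  have cb: "(int (R k x + 1) - int x) mod int e = i mod int e"
    using rb bx by (simp add: resP_def content_def)
  have ee: "1 < int e" using e by simp
  note nb = mod_neighbors[OF ee cb]
  define fr where "fr = (\<lambda>k y. filter (resP e i) (rowE k y))"
  have same: "\<And>y. 1 \<le> y \<Longrightarrow> y \<noteq> x \<Longrightarrow> fr k' y = fr k y"
  proof -
    fix y :: nat assume y: "1 \<le> y" "y \<noteq> x"
    show "fr k' y = fr k y"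
    proof (cases "y + 1 = x")
      case True
      have ax: "R k x < R k y" using a True y by (auto simp: addable_iff)
      have q1: "R k' y = R k y" "R k' (y - 1) = R k (y - 1)" using rl True by auto
      have a1: "addE k' y = addE k y"
        unfolding addE_def addable_iff q1 by (rule refl)
      have r1: "filter (resP e i) (remE k' y) = filter (resP e i) (remE k y)"
      proof (cases "R k x + 1 < R k y")
        case True
        then show ?thesis using rl \<open>y + 1 = x\<close> ax unfolding remE_def removable_iff by simp
      next
        case False
        then have eq: "R k y = R k x + 1" using ax by simp
        have "\<not> removable_row k' y" using rl \<open>y + 1 = x\<close> eq by (simp add: removable_iff)
        moreover have "\<not> resP e i (False, (y, R k y))"
          using nb(1) eq \<open>y + 1 = x\<close>[symmetric] by (simp add: resP_def content_def algebra_simps)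
        ultimately show ?thesis unfolding remE_def by simp
      qed
      show ?thesis using a1 r1 unfolding fr_def rowE_def by simp
    next
      case False
      note F = False
      show ?thesis
      proof (cases "y = x + 1")
        case True
        have mono: "R k (x + 1) \<le> R k x" using part_mono[OF p x(1), of "x + 1"] by simp
        have r1: "remE k' y = remE k y" using rl True unfolding remE_def removable_iff by simp
        have a1: "filter (resP e i) (addE k' y) = filter (resP e i) (addE k y)"
        proof (cases "R k (x + 1) < R k x")
          case True
          then show ?thesis using rl \<open>y = x + 1\<close> mono unfolding addE_def addable_iff by simp
        next
          case False
          then have eq: "R k (x + 1) = R k x" using mono by simp
          have "\<not> addable_row k y" using \<open>y = x + 1\<close> eq x by (simp add: addable_iff)
          moreover have "\<not> resP e i (True, (y, R k y + 1))"
            using nb(2) eq \<open>y = x + 1\<close> by (simp add: resP_def content_def algebra_simps)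
          moreover have "R k' y = R k y" using rl y(2) by simp
          ultimately show ?thesis unfolding addE_def by simp
        qed
        show ?thesis using a1 r1 unfolding fr_def rowE_def by simp
      next
        case False
        have "rowE k' y = rowE k y"
          by (rule rowE_same) (use rl y F False in auto)
        then show ?thesis by (simp add: fr_def)
      qed
    qed
  qed
  have frk: "fr k x = [(True, b)]"
  proof -
    have "addE k x = [(True, b)]" using a bx by (simp add: addE_def)
    moreover have "filter (resP e i) (remE k x) = []"
      using nb(2) unfolding remE_def by (simp add: resP_def content_def algebra_simps)
    ultimately show ?thesis using rb by (simp add: fr_def rowE_def)
  qed
  have frk': "fr k' x = [(False, b)]"
  proof -
    have mono: "R k (x + 1) \<le> R k x" using part_mono[OF p x(1), of "x + 1"] by simp
    have "filter (resP e i) (addE k' x) = []"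
      using nb(1) rl unfolding addE_def by (simp add: resP_def content_def algebra_simps)
    moreover have "remE k' x = [(False, b)]"
      using rl mono x bx unfolding remE_def removable_iff by simp
    ultimately show ?thesis using rb by (simp add: fr_def rowE_def resP_def)
  qed
  define M where "M = length k + 3"
  have M1: "length k + 2 \<le> M" and M2: "length k' + 2 \<le> M" using lk' by (auto simp: M_def)
  have split: "[1..<M] = [1..<x] @ x # [x + 1..<M]"
  proof -
    have xM: "x < M" using x M1 by simp
    have "[1..<M] = [1..<x] @ [x..<M]" using upt_add_eq_append[of 1 x "M - x"] x(1) xM by simp
    moreover have "[x..<M] = x # [Suc x..<M]" by (rule upt_conv_Cons) (use xM in simp)
    ultimately show ?thesis by simp
  qed
  have i1: "isig e i k = concat (map (fr k) [1..<x]) @ (True, b) # concat (map (fr k) [x + 1..<M])"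
    using isig_rows[OF p M1, of e i] split frk by (simp add: fr_def del: upt_Suc)
  have "isig e i k' = concat (map (fr k') [1..<x]) @ (False, b) # concat (map (fr k') [x + 1..<M])"
    using isig_rows[OF p' M2, of e i] split frk' by (simp add: fr_def del: upt_Suc)
  also have "concat (map (fr k') [1..<x]) = concat (map (fr k) [1..<x])"
    using same by (intro arg_cong[where f=concat] map_cong) auto
  also have "concat (map (fr k') [x + 1..<M]) = concat (map (fr k) [x + 1..<M])"
    using same by (intro arg_cong[where f=concat] map_cong) auto
  finally have i2: "isig e i k' = concat (map (fr k) [1..<x]) @ (False, b) # concat (map (fr k) [x + 1..<M])" .
  fix A B assume AB: "isig e i k = A @ (True, b) # B"
  have d: "distinct (isig e i k)" by (rule isig_distinct[OF p])
  then have "A = concat (map (fr k) [1..<x]) \<and> B = concat (map (fr k) [x + 1..<M])"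
  proof -
    have n1: "(True, b) \<notin> set A" using d AB by simp
    have n2: "(True, b) \<notin> set B" using d AB by simp
    have "A @ (True, b) # B = concat (map (fr k) [1..<x]) @ (True, b) # concat (map (fr k) [x + 1..<M])"
      using AB i1 by simp
    then show ?thesis using append_Cons_eq_iff[OF n1 n2] by blast
  qed
  then show "isig e i (add_box k b) = A @ (False, b) # B" using i2 by (simp add: k'_def)
qed



definition blk :: "bool \<Rightarrow> (bool \<times> 'a) list \<Rightarrow> bool" where
  "blk s w \<longleftrightarrow> w = [] \<or> (\<exists>a b. w = [(s, a), ((\<not> s), b)])"

lemma foldl_blk: "blk s w \<Longrightarrow> foldl (step s) acc w = acc"
  unfolding blk_def step_def by auto

lemma foldl_blocks:
  "foldl (step s) acc (concat (map h ys)) = foldl (step s) acc (concat (map (\<lambda>y. if blk s (h y) then [] else h y) ys))"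
proof (induction ys arbitrary: acc)
  case (Cons y ys)
  show ?case
  proof (cases "blk s (h y)")
    case True then show ?thesis using Cons foldl_blk[OF True] by simp
  next
    case False then show ?thesis using Cons by simp
  qed
qed simp

lemma persist: "fst z = (\<not> s) \<Longrightarrow> z \<in> set acc \<Longrightarrow> z \<in> set (foldl (step s) acc xs)"
proof (induction xs arbitrary: acc)
  case (Cons a xs)
  have "z \<in> set (step s acc a)"
  proof (cases "fst a = (\<not> s) \<and> acc \<noteq> [] \<and> fst (last acc) = s")
    case True
    then have "z \<noteq> last acc" using Cons.prems by auto
    then have "z \<in> set (butlast acc)" using Cons.prems(2) True
      by (metis append_butlast_last_id butlast_snoc in_set_butlast_appendI rotate1.simps(2) set_ConsD set_rotate1)
    then show ?thesis using True by (simp add: step_def)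
  next
    case False then show ?thesis using Cons.prems by (auto simp: step_def)
  qed
  then show ?case using Cons.IH Cons.prems by simp
qed simp

lemma singles_map:
  "concat (map (\<lambda>y. if P (y + 1) then [F (y + 1)] else []) [0..<M]) = map F (filter P [1..<M + 1])"
  by (induction M) auto

lemma last_max: "sorted_wrt (<) (xs::nat list) \<Longrightarrow> xs \<noteq> [] \<Longrightarrow> z \<in> set xs \<Longrightarrow> z \<le> last xs"
proof (induction xs)
  case (Cons a xs)
  show ?case
  proof (cases "xs = []")
    case True then show ?thesis using Cons by simp
  next
    case False
    then have "last xs \<in> set xs" by simp
    then show ?thesis using Cons False by (auto intro: less_imp_le)
  qed
qed simp

lemma noadj_sorted:
  assumes "sorted_wrt (<) (ts::nat list)"
  shows "noadj False (map (\<lambda>t. (t \<le> \<theta>, F t)) ts)"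
  unfolding noadj_def
proof (intro allI impI notI)
  fix u a b v assume eq: "map (\<lambda>t. (t \<le> \<theta>, F t)) ts = u @ a # b # v" and ab: "fst a = False \<and> fst b = (\<not> False)"
  from eq obtain u' r where "ts = u' @ r" "map (\<lambda>t. (t \<le> \<theta>, F t)) r = a # b # v"
    by (auto simp: map_eq_append_conv)
  moreover then obtain t t' v' where "r = t # t' # v'" "a = (t \<le> \<theta>, F t)" "b = (t' \<le> \<theta>, F t')"
    by (auto simp: map_eq_Cons_conv)
  ultimately have "t < t'" using assms by (simp add: sorted_wrt_append)
  then show False using ab \<open>a = _\<close> \<open>b = _\<close> by simp
qed

lemma noadj_sorted_True:
  assumes "sorted_wrt (>) (ts::nat list)"
  shows "noadj True (map (\<lambda>t. (t \<le> \<theta>, F t)) ts)"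
  unfolding noadj_def
proof (intro allI impI notI)
  fix u a b v assume eq: "map (\<lambda>t. (t \<le> \<theta>, F t)) ts = u @ a # b # v" and ab: "fst a = True \<and> fst b = (\<not> True)"
  from eq obtain u' r where "ts = u' @ r" "map (\<lambda>t. (t \<le> \<theta>, F t)) r = a # b # v"
    by (auto simp: map_eq_append_conv)
  moreover then obtain t t' v' where "r = t # t' # v'" "a = (t \<le> \<theta>, F t)" "b = (t' \<le> \<theta>, F t')"
    by (auto simp: map_eq_Cons_conv)
  ultimately have "t' < t" using assms by (simp add: sorted_wrt_append)
  then show False using ab \<open>a = _\<close> \<open>b = _\<close> by simp
qed

lemma split_upt: "a \<le> x \<Longrightarrow> x < M \<Longrightarrow> [a..<M] = [a..<x] @ x # [Suc x..<M]"
proof -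
  assume "a \<le> x" "x < M"
  then have "[a..<M] = [a..<x] @ [x..<M]" using upt_add_eq_append[of a x "M - x"] by simp
  moreover have "[x..<M] = x # [Suc x..<M]" by (rule upt_conv_Cons) (use \<open>x < M\<close> in simp)
  ultimately show ?thesis by simp
qed

lemma opow_Suc': "opow F (Suc m) k = Option.bind (opow F m k) F" by simp

lemma sigma_run:
  fixes k :: "nat list" and T :: "nat set"
  assumes p: "is_partition k" and e: "1 < e" and M: "length k + 1 \<le> M"
    and T: "\<And>t. t \<in> T \<Longrightarrow> 1 \<le> t \<and> t \<le> M"
    and g1: "\<And>y. y < M \<Longrightarrow> y + 1 \<in> T \<Longrightarrow> filter (resP e i) (gapE k y) = [(True, (y + 1, R k (y + 1) + 1))]"
    and g2: "\<And>y. y < M \<Longrightarrow> y + 1 \<notin> T \<Longrightarrow> blk False (filter (resP e i) (gapE k y))"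
  shows "\<exists>k'. sigma e i k = Some k' \<and> is_partition k' \<and> (\<forall>x. R k' x = R k x + (if x \<in> T then 1 else 0))"
proof -
  define bx where "bx = (\<lambda>t. (t, R k t + 1))"
  define g0 where "g0 = (\<lambda>y. filter (resP e i) (gapE k y))"
  define h where "h = (\<lambda>\<theta> y. if y + 1 \<in> T then [(y + 1 \<le> \<theta>, bx (y + 1))] else g0 y)"
  define W where "W = (\<lambda>\<theta>. concat (map (h \<theta>) [0..<M]))"
  define ts where "ts = filter (\<lambda>t. t \<in> T) [1..<M + 1]"
  have ts_sorted: "sorted_wrt (<) ts" unfolding ts_def by (intro sorted_wrt_filter) (simp del: upt_Suc)
  have ts_dist: "distinct ts" unfolding ts_def by simp
  have ts_set: "set ts = T" using T unfolding ts_def by (auto simp del: upt_Suc) (metis Suc_leI le_imp_less_Suc)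
  have redW: "red False (W \<theta>) = map (\<lambda>t. (t \<le> \<theta>, bx t)) ts" for \<theta>
  proof -
    have "red False (W \<theta>) = foldl (step False) [] (concat (map (\<lambda>y. if blk False (h \<theta> y) then [] else h \<theta> y) [0..<M]))"
      unfolding red_def W_def by (rule foldl_blocks)
    also have "concat (map (\<lambda>y. if blk False (h \<theta> y) then [] else h \<theta> y) [0..<M]) =
        concat (map (\<lambda>y. if y + 1 \<in> T then [(y + 1 \<le> \<theta>, bx (y + 1))] else []) [0..<M])"
    proof (intro arg_cong[where f=concat] map_cong refl)
      fix y assume "y \<in> set [0..<M]"
      then have yM: "y < M" by simp
      show "(if blk False (h \<theta> y) then [] else h \<theta> y) = (if y + 1 \<in> T then [(y + 1 \<le> \<theta>, bx (y + 1))] else [])"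
      proof (cases "y + 1 \<in> T")
        case True then show ?thesis by (simp add: h_def blk_def)
      next
        case False then show ?thesis using g2[OF yM False] by (simp add: h_def g0_def)
      qed
    qed
    also have "\<dots> = map (\<lambda>t. (t \<le> \<theta>, bx t)) ts"
      unfolding ts_def by (rule singles_map[where F="\<lambda>t. (t \<le> \<theta>, bx t)"])
    finally have "red False (W \<theta>) = red False (map (\<lambda>t. (t \<le> \<theta>, bx t)) ts)" by (simp add: red_def)
    also have "\<dots> = map (\<lambda>t. (t \<le> \<theta>, bx t)) ts" by (rule red_noadj[OF noadj_sorted[OF ts_sorted]])
    finally show ?thesis .
  qed
  define inv where "inv = (\<lambda>\<theta> k'. is_partition k' \<and> (\<forall>x. R k' x = R k x + (if x \<in> T \<and> \<theta> < x then 1 else 0))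
       \<and> isig e i k' = W \<theta>)"
  have IpIm: "Iplus e i k' = map bx (filter (\<lambda>t. t \<le> \<theta>) ts) \<and> Iminus e i k' = map bx (filter (\<lambda>t. \<not> t \<le> \<theta>) ts)"
    if "inv \<theta> k'" for \<theta> k'
    using that redW[of \<theta>] unfolding inv_def Iplus_def Iminus_def reduce_red
    by (simp add: filter_map comp_def)
  have base: "inv M k"
  proof -
    have "isig e i k = concat (map g0 [0..<M])" unfolding g0_def by (rule isig_gaps[OF p M])
    also have "\<dots> = W M" unfolding W_def h_def
      by (intro arg_cong[where f=concat] map_cong refl) (auto simp: g0_def g1 bx_def T)
    finally show ?thesis unfolding inv_def using p T by force
  qed
  define c where "c = (\<lambda>\<theta>. length (filter (\<lambda>t. t \<le> \<theta>) ts))"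
  have cM: "c M = length ts" unfolding c_def
    by (rule arg_cong[where f=length], rule filter_True) (use T ts_set in auto)
  have iter: "m \<le> length ts \<Longrightarrow> \<exists>\<theta> k'. c \<theta> = length ts - m \<and> opow (f_op e i) m k = Some k' \<and> inv \<theta> k'" for m
  proof (induction m)
    case 0 then show ?case using base cM by auto
  next
    case (Suc m)
    then obtain \<theta> k' where c\<theta>: "c \<theta> = length ts - m" and ok: "opow (f_op e i) m k = Some k'" and iv: "inv \<theta> k'"
      by auto
    define fl where "fl = filter (\<lambda>t. t \<le> \<theta>) ts"
    have fl_ne: "fl \<noteq> []" using c\<theta> Suc.prems unfolding c_def fl_def by auto
    define t where "t = last fl"
    have t_fl: "t \<in> set fl" unfolding t_def using fl_ne by simp
    have tT: "t \<in> T" "t \<le> \<theta>" using t_fl ts_set unfolding fl_def by auto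
    have t_max: "\<And>z. z \<in> T \<Longrightarrow> z \<le> \<theta> \<Longrightarrow> z \<le> t"
      unfolding t_def using last_max[of fl] fl_ne ts_sorted ts_set unfolding fl_def
      by (simp add: sorted_wrt_filter)
    have t1: "1 \<le> t" "t \<le> M" using T tT by auto
    have Ip: "Iplus e i k' = map bx fl" using IpIm[OF iv] by (simp add: fl_def)
    have fstep: "f_op e i k' = Some (add_box k' (bx t))"
      unfolding f_op_def Ip t_def using fl_ne by (simp add: last_map)
    have p': "is_partition k'" and isW: "isig e i k' = W \<theta>" and rl: "\<And>x. R k' x = R k x + (if x \<in> T \<and> \<theta> < x then 1 else 0)"
      using iv unfolding inv_def by auto
    have splitW: "W \<theta>' = concat (map (h \<theta>') [0..<t - 1]) @ h \<theta>' (t - 1) @ concat (map (h \<theta>') [t..<M])" for \<theta>'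
      unfolding W_def using split_upt[of 0 "t - 1" M] t1 by simp
    have ht: "h \<theta> (t - 1) = [(True, bx t)]" using tT t1 by (simp add: h_def)
    have mem: "(True, bx t) \<in> set (isig e i k')" using isW splitW[of \<theta>] ht by simp
    note fl = flip[OF p' e mem]
    define \<theta>' where "\<theta>' = t - 1"
    have hsame: "\<And>y. y \<noteq> t - 1 \<Longrightarrow> h \<theta>' y = h \<theta> y"
    proof -
      fix y assume "y \<noteq> t - 1"
      then have "y + 1 \<noteq> t" using t1 by auto
      then have "y + 1 \<in> T \<Longrightarrow> (y + 1 \<le> \<theta>') = (y + 1 \<le> \<theta>)" using t_max[of "y + 1"] tT unfolding \<theta>'_def by auto
      then show "h \<theta>' y = h \<theta> y" unfolding h_def by simp
    qed
    have ht': "h \<theta>' (t - 1) = [(False, bx t)]" using tT t1 by (simp add: h_def \<theta>'_def)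
    have "isig e i (add_box k' (bx t)) = W \<theta>'"
    proof -
      have "isig e i k' = concat (map (h \<theta>) [0..<t - 1]) @ (True, bx t) # concat (map (h \<theta>) [t..<M])"
        using isW splitW[of \<theta>] ht by simp
      then have "isig e i (add_box k' (bx t)) = concat (map (h \<theta>) [0..<t - 1]) @ (False, bx t) # concat (map (h \<theta>) [t..<M])"
        by (rule fl(3))
      also have "\<dots> = W \<theta>'"
      proof -
        have "concat (map (h \<theta>') [0..<t - 1]) = concat (map (h \<theta>) [0..<t - 1])"
          using hsame by (intro arg_cong[where f=concat] map_cong) auto
        moreover have "concat (map (h \<theta>') [t..<M]) = concat (map (h \<theta>) [t..<M])"
          using hsame t1 by (intro arg_cong[where f=concat] map_cong) auto
        ultimately show ?thesis unfolding splitW[of \<theta>'] ht' by simp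
      qed
      finally show ?thesis .
    qed
    moreover have "R (add_box k' (bx t)) x = R k x + (if x \<in> T \<and> \<theta>' < x then 1 else 0)" for x
      using fl(2)[of x] rl[of x] tT t_max[of x] t1 unfolding \<theta>'_def by (auto simp: bx_def)
    ultimately have iv': "inv \<theta>' (add_box k' (bx t))" using fl(1) unfolding inv_def by auto
    have "c \<theta>' = c \<theta> - 1"
    proof -
      have "{z. z \<le> \<theta>'} \<inter> set ts = ({z. z \<le> \<theta>} \<inter> set ts) - {t}"
        using t_max tT ts_set t1 unfolding \<theta>'_def by force
      moreover have "t \<in> {z. z \<le> \<theta>} \<inter> set ts" using tT ts_set by auto
      ultimately show ?thesis unfolding c_def using ts_dist by (simp add: distinct_length_filter)
    qed
    then have "c \<theta>' = length ts - Suc m" using c\<theta> by simp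
    moreover have "opow (f_op e i) (Suc m) k = Some (add_box k' (bx t))" using ok fstep by simp
    ultimately show ?case using iv' by blast
  qed
  obtain \<theta> k' where c\<theta>: "c \<theta> = 0" and ok: "opow (f_op e i) (length ts) k = Some k'" and iv: "inv \<theta> k'"
    using iter[of "length ts"] by auto
  have none: "\<And>x. x \<in> T \<Longrightarrow> \<theta> < x"
  proof (rule ccontr)
    fix x assume "x \<in> T" "\<not> \<theta> < x"
    then have "x \<in> set (filter (\<lambda>t. t \<le> \<theta>) ts)" using ts_set by auto
    then have "filter (\<lambda>t. t \<le> \<theta>) ts \<noteq> []" by (metis empty_iff list.set(1))
    then show False using c\<theta> unfolding c_def by simp
  qed
  have "Iminus e i k = []" using IpIm[OF base] T ts_set by (auto simp: filter_empty_conv)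
  moreover have "length (Iplus e i k) = length ts" using IpIm[OF base] T ts_set
    by (simp add: filter_True)
  ultimately have "sigma e i k = Some k'" using ok by (simp add: sigma_def)
  then show ?thesis using iv none unfolding inv_def by auto
qed



lemma foldr_max_ge: "v \<in> set k \<Longrightarrow> v \<le> foldr max k (0::nat)"
  by (induction k) auto

lemma foldr_max_mem: "foldr max k (0::nat) = 0 \<or> foldr max k 0 \<in> set k"
  by (induction k) (auto simp: max_def)

lemma rowlen_pt: "1 \<le> y \<Longrightarrow> R (ptranspose k) y = length (filter (\<lambda>v. y \<le> v) k)"
proof -
  assume y: "1 \<le> y"
  show ?thesis
  proof (cases "y \<le> foldr max k 0")
    case True
    then have "[1..<foldr max k 0 + 1] ! (y - 1) = y" using y by (simp add: nth_upt del: upt_Suc)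
    then show ?thesis using y True unfolding rowlen_def ptranspose_def by (simp del: upt_Suc)
  next
    case False
    then have "filter (\<lambda>v. y \<le> v) k = []" using foldr_max_ge[of _ k] by (force simp: filter_empty_conv)
    then show ?thesis using False unfolding rowlen_def ptranspose_def by simp
  qed
qed

lemma length_pt: "length (ptranspose k) = foldr max k 0"
  by (simp add: ptranspose_def)

lemma pt_partition: "is_partition (ptranspose k)"
proof (rule part_intro)
  fix y :: nat assume y: "1 \<le> y"
  show "R (ptranspose k) (y + 1) \<le> R (ptranspose k) y"
  proof -
    have "length (filter (\<lambda>v. y + 1 \<le> v) k) \<le> length (filter (\<lambda>v. y \<le> v) k)"
      by (induction k) auto
    then show ?thesis using y by (simp add: rowlen_pt)
  qed
next
  fix y :: nat assume y: "1 \<le> y" "y \<le> length (ptranspose k)"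
  then have "foldr max k 0 \<in> set k" using foldr_max_mem[of k] by (auto simp: length_pt)
  moreover have "y \<le> foldr max k 0" using y by (simp add: length_pt)
  ultimately have "filter (\<lambda>v. y \<le> v) k \<noteq> []" by (auto simp: filter_empty_conv)
  then show "0 < R (ptranspose k) y" using y by (simp add: rowlen_pt)
qed

lemma fund_aux:
  assumes "is_partition k" "1 \<le> x" "1 \<le> y"
  shows "y \<le> R k x \<longleftrightarrow> x \<le> length (filter (\<lambda>v. y \<le> v) k)"
  using assms
proof (induction k arbitrary: x)
  case Nil then show ?case by (simp add: rowlen_def)
next
  case (Cons a k)
  have pk: "is_partition k" using Cons.prems(1) by (simp add: is_partition_def)
  have ak: "\<And>v. v \<in> set k \<Longrightarrow> v \<le> a" using Cons.prems(1) by (simp add: is_partition_def)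
  have Rc: "R (a # k) x = (if x = 1 then a else R k (x - 1))"
    using Cons.prems(2) by (auto simp: rowlen_def nth_Cons')
  show ?case
  proof (cases "y \<le> a")
    case True
    show ?thesis
    proof (cases "x = 1")
      case True then show ?thesis using \<open>y \<le> a\<close> Rc by simp
    next
      case False
      then have "y \<le> R k (x - 1) \<longleftrightarrow> x - 1 \<le> length (filter (\<lambda>v. y \<le> v) k)"
        using Cons.IH[OF pk _ Cons.prems(3), of "x - 1"] Cons.prems(2) by simp
      then show ?thesis using False Rc \<open>y \<le> a\<close> Cons.prems(2) by auto
    qed
  next
    case False
    then have "filter (\<lambda>v. y \<le> v) k = []" using ak by (force simp: filter_empty_conv)
    moreover have "R (a # k) x \<le> a"
      using Rc part_mono[OF Cons.prems(1), of 1 x] Cons.prems(2) by (simp add: rowlen_def)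
    ultimately show ?thesis using False Cons.prems(2) by auto
  qed
qed

lemma fund:
  assumes "is_partition k" "1 \<le> x" "1 \<le> y"
  shows "y \<le> R k x \<longleftrightarrow> x \<le> R (ptranspose k) y"
  using fund_aux[OF assms] assms(3) by (simp add: rowlen_pt)

lemma nat_le_ext: "(\<And>y::nat. 1 \<le> y \<Longrightarrow> y \<le> a \<longleftrightarrow> y \<le> b) \<Longrightarrow> a = b"
proof (rule ccontr)
  assume h: "\<And>y::nat. 1 \<le> y \<Longrightarrow> y \<le> a \<longleftrightarrow> y \<le> b" and ne: "a \<noteq> b"
  then consider "a < b" | "b < a" by linarith
  then show False
  proof cases
    case 1 then have "1 \<le> b" by simp
    from h[OF this] 1 show False by simp
  next
    case 2 then have "1 \<le> a" by simp
    from h[OF this] 2 show False by simp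
  qed
qed

lemma pt_pt: "is_partition k \<Longrightarrow> ptranspose (ptranspose k) = k"
proof (rule part_eq[OF pt_partition])
  assume p: "is_partition k"
  fix x :: nat assume x: "1 \<le> x"
  show "R (ptranspose (ptranspose k)) x = R k x"
  proof (rule nat_le_ext)
    fix y :: nat assume y: "1 \<le> y"
    show "y \<le> R (ptranspose (ptranspose k)) x \<longleftrightarrow> y \<le> R k x"
      using fund[OF pt_partition y x, of k] fund[OF p x y] by simp
  qed
qed

lemma rowlen_pt_card:
  assumes p: "is_partition k" and y: "1 \<le> y"
  shows "R (ptranspose k) y = card {x. 1 \<le> x \<and> y \<le> R k x}"
proof -
  have "{x. 1 \<le> x \<and> y \<le> R k x} = {1..R (ptranspose k) y}"
    using fund[OF p _ y] by auto
  then show ?thesis by simp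
qed

definition D :: "nat list \<Rightarrow> nat \<Rightarrow> nat \<Rightarrow> bool" where
  "D k x y \<longleftrightarrow> 1 \<le> x \<and> 1 \<le> y \<and> y \<le> R k x"

lemma D_pt: "is_partition k \<Longrightarrow> D (ptranspose k) x y \<longleftrightarrow> D k y x"
  unfolding D_def using fund by blast

lemma memT_D:
  assumes p: "is_partition k"
  shows "(True, (x, y)) \<in> set (ar_boxes k) \<longleftrightarrow>
    1 \<le> x \<and> 1 \<le> y \<and> \<not> D k x y \<and> (x = 1 \<or> D k (x - 1) y) \<and> (y = 1 \<or> D k x (y - 1))"
proof -
  have "(True, (x, y)) \<in> set (ar_boxes k) \<longleftrightarrow> y = R k x + 1 \<and> addable_row k x"
    using mem_ar_True by auto
  also have "\<dots> \<longleftrightarrow> 1 \<le> x \<and> 1 \<le> y \<and> \<not> D k x y \<and> (x = 1 \<or> D k (x - 1) y) \<and> (y = 1 \<or> D k x (y - 1))"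
    unfolding addable_iff D_def by auto
  finally show ?thesis .
qed

lemma memF_D:
  assumes p: "is_partition k"
  shows "(False, (x, y)) \<in> set (ar_boxes k) \<longleftrightarrow> D k x y \<and> \<not> D k (x + 1) y \<and> \<not> D k x (y + 1)"
proof -
  have "(False, (x, y)) \<in> set (ar_boxes k) \<longleftrightarrow> y = R k x \<and> removable_row k x"
    using mem_ar_False by auto
  also have "\<dots> \<longleftrightarrow> D k x y \<and> \<not> D k (x + 1) y \<and> \<not> D k x (y + 1)"
    unfolding removable_iff D_def by auto
  finally show ?thesis .
qed

definition swb :: "bool \<times> (nat \<times> nat) \<Rightarrow> bool \<times> (nat \<times> nat)" where
  "swb sb = (fst sb, (snd (snd sb), fst (snd sb)))"

lemma swb_swb[simp]: "swb (swb sb) = sb" by (simp add: swb_def)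

lemma content_swb: "content (snd (swb sb)) = - content (snd sb)"
  by (simp add: swb_def content_def)

lemma sorted_cgt_unique:
  "sorted_wrt cgt xs \<Longrightarrow> sorted_wrt cgt ys \<Longrightarrow> set xs = set ys \<Longrightarrow> xs = ys"
proof (induction xs arbitrary: ys)
  case Nil then show ?case by simp
next
  case (Cons a xs)
  then obtain c ys' where ys: "ys = c # ys'" by (cases ys) auto
  have ac: "a = c"
  proof (rule ccontr)
    assume "a \<noteq> c"
    have "a \<in> set (c # ys')" using Cons.prems(3) ys by (metis list.set_intros(1))
    moreover have "c \<in> set (a # xs)" using Cons.prems(3) ys by (metis list.set_intros(1))
    ultimately have "a \<in> set ys'" "c \<in> set xs" using \<open>a \<noteq> c\<close> by auto
    then have "cgt c a" "cgt a c" using Cons.prems ys by auto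
    then show False by (simp add: cgt_def)
  qed
  have "a \<notin> set xs" "a \<notin> set ys'" using Cons.prems ys ac by (auto simp: cgt_def)
  then have "set xs = set ys'" using Cons.prems(3) ys ac by auto
  then show ?case using Cons ys ac by simp
qed

lemma ar_pt:
  assumes p: "is_partition k"
  shows "ar_boxes (ptranspose k) = rev (map swb (ar_boxes k))"
proof (rule sorted_cgt_unique)
  show "sorted_wrt cgt (ar_boxes (ptranspose k))" by (rule ar_sorted[OF pt_partition])
  have "sorted_wrt cgt (ar_boxes k)" by (rule ar_sorted[OF p])
  then show "sorted_wrt cgt (rev (map swb (ar_boxes k)))"
    unfolding cgt_def by (simp add: sorted_wrt_rev sorted_wrt_map cgt_def content_swb)
  show "set (ar_boxes (ptranspose k)) = set (rev (map swb (ar_boxes k)))"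
  proof (rule set_eqI)
    fix sb :: "bool \<times> (nat \<times> nat)"
    obtain s x y where sb: "sb = (s, (x, y))" by (cases sb) auto
    have "sb \<in> set (ar_boxes (ptranspose k)) \<longleftrightarrow> (s, (y, x)) \<in> set (ar_boxes k)"
      unfolding sb by (cases s) (auto simp: memT_D[OF p] memF_D[OF p] memT_D[OF pt_partition]
          memF_D[OF pt_partition] D_pt[OF p])
    also have "\<dots> \<longleftrightarrow> sb \<in> set (rev (map swb (ar_boxes k)))"
    proof -
      have "sb \<in> swb ` set (ar_boxes k) \<longleftrightarrow> swb sb \<in> set (ar_boxes k)"
        by (metis image_eqI imageE swb_swb)
      then show ?thesis unfolding sb by (simp add: swb_def)
    qed
    finally show "sb \<in> set (ar_boxes (ptranspose k)) \<longleftrightarrow> sb \<in> set (rev (map swb (ar_boxes k)))" .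
  qed
qed

lemma resP_swb: "resP e i (swb sb) \<longleftrightarrow> resP e (- i) sb"
proof -
  have "resP e i (swb sb) \<longleftrightarrow> (- content (snd sb)) mod int e = i mod int e"
    by (simp add: resP_def content_swb)
  also have "\<dots> \<longleftrightarrow> int e dvd (- content (snd sb) - i)" by (simp only: mod_eq_dvd_iff)
  also have "\<dots> \<longleftrightarrow> int e dvd (content (snd sb) - (- i))"
    by (metis dvd_minus_iff minus_diff_eq diff_minus_eq_add add.commute uminus_add_conv_diff)
  also have "\<dots> \<longleftrightarrow> resP e (- i) sb" by (simp only: resP_def mod_eq_dvd_iff)
  finally show ?thesis .
qed

lemma isig_pt:
  assumes p: "is_partition k"
  shows "isig e i (ptranspose k) = rev (map swb (isig e (- i) k))"
proof -
  have "isig e i (ptranspose k) = filter (resP e i) (rev (map swb (ar_boxes k)))"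
    by (simp add: isig_filter[OF pt_partition] ar_pt[OF p])
  also have "\<dots> = rev (map swb (filter (resP e (- i)) (ar_boxes k)))"
    by (simp add: rev_filter[symmetric] filter_map comp_def resP_swb)
  finally show ?thesis by (simp add: isig_filter[OF p])
qed

lemma isig_pt': "is_partition k \<Longrightarrow> isig e i k = rev (map swb (isig e (- i) (ptranspose k)))"
  using isig_pt[OF pt_partition, of e i k] pt_pt by simp



lemma pt_add_box:
  assumes p: "is_partition k" and m: "(True, b) \<in> set (ar_boxes k)"
  shows "R (ptranspose (add_box k b)) c = R (ptranspose k) c + (if c = snd b then 1 else 0)"
proof -
  obtain r where b: "b = (r, R k r + 1)" and a: "addable_row k r" using m mem_ar_True by blast
  have r: "1 \<le> r" "r \<le> length k + 1" using a by (auto simp: addable_row_def)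
  have p'': "is_partition (add_box k b)" unfolding b by (rule add_box_partition[OF p a])
  have rl: "\<And>x. R (add_box k b) x = R k x + (if x = r then 1 else 0)"
    unfolding b by (rule rowlen_add_box[OF r])
  show ?thesis
  proof (cases "1 \<le> c")
    case False then have "c = 0" by simp
    then show ?thesis using b by simp
  next
    case True
    have fin: "finite {x. 1 \<le> x \<and> c \<le> R k x}"
    proof -
      have "{x. 1 \<le> x \<and> c \<le> R k x} = {1..R (ptranspose k) c}" using fund[OF p _ True] by auto
      then show ?thesis by simp
    qed
    show ?thesis
    proof (cases "c = snd b")
      case True
      have "{x. 1 \<le> x \<and> c \<le> R (add_box k b) x} = insert r {x. 1 \<le> x \<and> c \<le> R k x}"
        using rl r True b by (auto split: if_splits)
      moreover have "r \<notin> {x. 1 \<le> x \<and> c \<le> R k x}" using True b by simp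
      ultimately show ?thesis using rowlen_pt_card[OF p'' \<open>1 \<le> c\<close>] rowlen_pt_card[OF p \<open>1 \<le> c\<close>] fin True
        by simp
    next
      case False
      have "{x. 1 \<le> x \<and> c \<le> R (add_box k b) x} = {x. 1 \<le> x \<and> c \<le> R k x}"
        using rl r False b by (auto split: if_splits)
      then show ?thesis using rowlen_pt_card[OF p'' \<open>1 \<le> c\<close>] rowlen_pt_card[OF p \<open>1 \<le> c\<close>] False
        by simp
    qed
  qed
qed

definition swp :: "nat \<times> nat \<Rightarrow> nat \<times> nat" where "swp b = (snd b, fst b)"

lemma swb_pair[simp]: "swb (s, b) = (s, swp b)" by (simp add: swb_def swp_def)

lemma rev_singles:
  "rev (concat (map (\<lambda>y. rev (map swb (H y))) ys)) = concat (map (\<lambda>y. map swb (H y)) (rev ys))"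
  by (induction ys) auto

lemma sigma_dual_run:
  fixes k :: "nat list" and T :: "nat set"
  assumes p: "is_partition k" and e: "1 < e" and M: "length (ptranspose k) + 1 \<le> M"
    and T: "\<And>t. t \<in> T \<Longrightarrow> 1 \<le> t \<and> t \<le> M"
    and g1: "\<And>y. y < M \<Longrightarrow> y + 1 \<in> T \<Longrightarrow> filter (resP e (- i)) (gapE (ptranspose k) y) = [(True, (y + 1, R (ptranspose k) (y + 1) + 1))]"
    and g2: "\<And>y. y < M \<Longrightarrow> y + 1 \<notin> T \<Longrightarrow> blk False (filter (resP e (- i)) (gapE (ptranspose k) y))"
  shows "\<exists>k'. sigma_dual e i k = Some k' \<and> is_partition k' \<and>
      (\<forall>x. R (ptranspose k') x = R (ptranspose k) x + (if x \<in> T then 1 else 0))"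
proof -
  define kt where "kt = ptranspose k"
  have pt: "is_partition kt" unfolding kt_def by (rule pt_partition)
  define bx where "bx = (\<lambda>t. (t, R kt t + 1))"
  define g0 where "g0 = (\<lambda>y. filter (resP e (- i)) (gapE kt y))"
  define h where "h = (\<lambda>\<theta> y. if y + 1 \<in> T then [(y + 1 \<le> \<theta>, bx (y + 1))] else g0 y)"
  define W where "W = (\<lambda>\<theta>. concat (map (h \<theta>) [0..<M]))"
  define V where "V = (\<lambda>\<theta>. rev (map swb (W \<theta>)))"
  define ts where "ts = filter (\<lambda>t. t \<in> T) [1..<M + 1]"
  have ts_sorted: "sorted_wrt (<) ts" unfolding ts_def by (intro sorted_wrt_filter) (simp del: upt_Suc)
  have ts_dist: "distinct ts" unfolding ts_def by simp
  have ts_set: "set ts = T" using T unfolding ts_def by (auto simp del: upt_Suc) (metis Suc_leI le_imp_less_Suc)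
  have redV: "red True (V \<theta>) = map (\<lambda>t. (t \<le> \<theta>, swp (bx t))) (rev ts)" for \<theta>
  proof -
    have "V \<theta> = concat (map (\<lambda>y. rev (map swb (h \<theta> y))) (rev [0..<M]))"
      unfolding V_def W_def by (simp add: rev_concat rev_map map_concat comp_def)
    then have "red True (V \<theta>) = foldl (step True) [] (concat (map (\<lambda>y. if blk True (rev (map swb (h \<theta> y))) then [] else rev (map swb (h \<theta> y))) (rev [0..<M])))"
      unfolding red_def by (simp add: foldl_blocks[where h="\<lambda>y. rev (map swb (h \<theta> y))"])
    also have "concat (map (\<lambda>y. if blk True (rev (map swb (h \<theta> y))) then [] else rev (map swb (h \<theta> y))) (rev [0..<M])) =
        concat (map (\<lambda>y. if y + 1 \<in> T then [(y + 1 \<le> \<theta>, swp (bx (y + 1)))] else []) (rev [0..<M]))"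
    proof (intro arg_cong[where f=concat] map_cong refl)
      fix y assume "y \<in> set (rev [0..<M])"
      then have yM: "y < M" by simp
      show "(if blk True (rev (map swb (h \<theta> y))) then [] else rev (map swb (h \<theta> y))) = (if y + 1 \<in> T then [(y + 1 \<le> \<theta>, swp (bx (y + 1)))] else [])"
      proof (cases "y + 1 \<in> T")
        case True then show ?thesis by (simp add: h_def blk_def swb_def swp_def)
      next
        case False
        then have "blk False (g0 y)" using g2[OF yM] by (simp add: g0_def kt_def)
        then have "blk True (rev (map swb (g0 y)))" by (auto simp: blk_def swb_def)
        then show ?thesis using False by (simp add: h_def)
      qed
    qed
    also have "\<dots> = rev (concat (map (\<lambda>y. if y + 1 \<in> T then [(y + 1 \<le> \<theta>, swp (bx (y + 1)))] else []) [0..<M]))"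
      by (simp add: rev_concat rev_map comp_def if_distrib cong: if_cong)
    also have "\<dots> = rev (map (\<lambda>t. (t \<le> \<theta>, swp (bx t))) ts)"
      unfolding ts_def using singles_map[where F="\<lambda>t. (t \<le> \<theta>, swp (bx t))" and P="\<lambda>t. t \<in> T" and M=M]
      by (simp del: upt_Suc)
    finally have "red True (V \<theta>) = red True (map (\<lambda>t. (t \<le> \<theta>, swp (bx t))) (rev ts))"
      by (simp add: red_def rev_map)
    also have "\<dots> = map (\<lambda>t. (t \<le> \<theta>, swp (bx t))) (rev ts)"
      by (rule red_noadj[OF noadj_sorted_True]) (use ts_sorted in \<open>simp add: sorted_wrt_rev\<close>)
    finally show ?thesis .
  qed
  define inv where "inv = (\<lambda>\<theta> k'. is_partition k' \<and> (\<forall>x. R (ptranspose k') x = R kt x + (if x \<in> T \<and> \<theta> < x then 1 else 0))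
       \<and> isig e i k' = V \<theta>)"
  have IpIm: "Iplus_dual e i k' = map (swp \<circ> bx) (rev (filter (\<lambda>t. t \<le> \<theta>) ts)) \<and> Iminus_dual e i k' = map (swp \<circ> bx) (rev (filter (\<lambda>t. \<not> t \<le> \<theta>) ts))"
    if "inv \<theta> k'" for \<theta> k'
    using that redV[of \<theta>] unfolding inv_def Iplus_dual_def Iminus_dual_def reduce_red
    by (simp add: filter_map comp_def rev_filter swb_def swp_def)
  have base: "inv M k"
  proof -
    have "isig e (- i) kt = concat (map g0 [0..<M])" unfolding g0_def by (rule isig_gaps[OF pt M[folded kt_def]])
    also have "\<dots> = W M" unfolding W_def h_def
      by (intro arg_cong[where f=concat] map_cong refl) (auto simp: g0_def g1 bx_def T kt_def)
    finally have "isig e i k = V M" unfolding V_def using isig_pt'[OF p, of e i] by (simp add: kt_def)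
    then show ?thesis unfolding inv_def using p T by (force simp: kt_def)
  qed
  define c where "c = (\<lambda>\<theta>. length (filter (\<lambda>t. t \<le> \<theta>) ts))"
  have cM: "c M = length ts" unfolding c_def
    by (rule arg_cong[where f=length], rule filter_True) (use T ts_set in auto)
  have iter: "m \<le> length ts \<Longrightarrow> \<exists>\<theta> k'. c \<theta> = length ts - m \<and> opow (f_dual e i) m k = Some k' \<and> inv \<theta> k'" for m
  proof (induction m)
    case 0 then show ?case using base cM by auto
  next
    case (Suc m)
    then obtain \<theta> k' where c\<theta>: "c \<theta> = length ts - m" and ok: "opow (f_dual e i) m k = Some k'" and iv: "inv \<theta> k'"
      by auto
    define fl where "fl = filter (\<lambda>t. t \<le> \<theta>) ts"
    have fl_ne: "fl \<noteq> []" using c\<theta> Suc.prems unfolding c_def fl_def by auto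
    define t where "t = last fl"
    have t_fl: "t \<in> set fl" unfolding t_def using fl_ne by simp
    have tT: "t \<in> T" "t \<le> \<theta>" using t_fl ts_set unfolding fl_def by auto
    have t_max: "\<And>z. z \<in> T \<Longrightarrow> z \<le> \<theta> \<Longrightarrow> z \<le> t"
      unfolding t_def using last_max[of fl] fl_ne ts_sorted ts_set unfolding fl_def
      by (simp add: sorted_wrt_filter)
    have t1: "1 \<le> t" "t \<le> M" using T tT by auto
    have Ip: "Iplus_dual e i k' = map (swp \<circ> bx) (rev fl)" using IpIm[OF iv] by (simp add: fl_def)
    have fstep: "f_dual e i k' = Some (add_box k' (swp (bx t)))"
      unfolding f_dual_def Ip t_def using fl_ne by (simp add: hd_map hd_rev)
    have p': "is_partition k'" and isV: "isig e i k' = V \<theta>" and rl: "\<And>x. R (ptranspose k') x = R kt x + (if x \<in> T \<and> \<theta> < x then 1 else 0)"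
      using iv unfolding inv_def by auto
    have splitW: "W \<theta>' = concat (map (h \<theta>') [0..<t - 1]) @ h \<theta>' (t - 1) @ concat (map (h \<theta>') [t..<M])" for \<theta>'
      unfolding W_def using split_upt[of 0 "t - 1" M] t1 by simp
    have ht: "h \<theta> (t - 1) = [(True, bx t)]" using tT t1 by (simp add: h_def)
    define P where "P = concat (map (h \<theta>) [0..<t - 1])"
    define Q where "Q = concat (map (h \<theta>) [t..<M])"
    have VP: "V \<theta> = rev (map swb Q) @ (True, swp (bx t)) # rev (map swb P)"
      unfolding V_def splitW[of \<theta>] ht P_def Q_def by (simp add: swb_def swp_def)
    have mem: "(True, swp (bx t)) \<in> set (isig e i k')" using isV VP by simp
    note fl = flip[OF p' e mem]
    define \<theta>' where "\<theta>' = t - 1"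
    have hsame: "\<And>y. y \<noteq> t - 1 \<Longrightarrow> h \<theta>' y = h \<theta> y"
    proof -
      fix y assume "y \<noteq> t - 1"
      then have "y + 1 \<noteq> t" using t1 by auto
      then have "y + 1 \<in> T \<Longrightarrow> (y + 1 \<le> \<theta>') = (y + 1 \<le> \<theta>)" using t_max[of "y + 1"] tT unfolding \<theta>'_def by auto
      then show "h \<theta>' y = h \<theta> y" unfolding h_def by simp
    qed
    have ht': "h \<theta>' (t - 1) = [(False, bx t)]" using tT t1 by (simp add: h_def \<theta>'_def)
    have "isig e i (add_box k' (swp (bx t))) = V \<theta>'"
    proof -
      have "isig e i (add_box k' (swp (bx t))) = rev (map swb Q) @ (False, swp (bx t)) # rev (map swb P)"
        by (rule fl(3)) (use isV VP in simp)
      also have "\<dots> = V \<theta>'"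
      proof -
        have "concat (map (h \<theta>') [0..<t - 1]) = P"
          unfolding P_def using hsame by (intro arg_cong[where f=concat] map_cong) auto
        moreover have "concat (map (h \<theta>') [t..<M]) = Q"
          unfolding Q_def using hsame t1 by (intro arg_cong[where f=concat] map_cong) auto
        ultimately show ?thesis unfolding V_def splitW[of \<theta>'] ht' by (simp add: swb_def swp_def)
      qed
      finally show ?thesis .
    qed
    moreover have "R (ptranspose (add_box k' (swp (bx t)))) x = R kt x + (if x \<in> T \<and> \<theta>' < x then 1 else 0)" for x
    proof -
      have m': "(True, swp (bx t)) \<in> set (ar_boxes k')" using mem by (simp add: isig_filter[OF p'])
      show ?thesis using pt_add_box[OF p' m', of x] rl[of x] tT t_max[of x] t1 unfolding \<theta>'_def
        by (auto simp: bx_def swp_def)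
    qed
    ultimately have iv': "inv \<theta>' (add_box k' (swp (bx t)))" using fl(1) unfolding inv_def by auto
    have "c \<theta>' = c \<theta> - 1"
    proof -
      have "{z. z \<le> \<theta>'} \<inter> set ts = ({z. z \<le> \<theta>} \<inter> set ts) - {t}"
        using t_max tT ts_set t1 unfolding \<theta>'_def by force
      moreover have "t \<in> {z. z \<le> \<theta>} \<inter> set ts" using tT ts_set by auto
      ultimately show ?thesis unfolding c_def using ts_dist by (simp add: distinct_length_filter)
    qed
    then have "c \<theta>' = length ts - Suc m" using c\<theta> by simp
    moreover have "opow (f_dual e i) (Suc m) k = Some (add_box k' (swp (bx t)))" using ok fstep by simp
    ultimately show ?case using iv' by blast
  qed
  obtain \<theta> k' where c\<theta>: "c \<theta> = 0" and ok: "opow (f_dual e i) (length ts) k = Some k'" and iv: "inv \<theta> k'"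
    using iter[of "length ts"] by auto
  have none: "\<And>x. x \<in> T \<Longrightarrow> \<theta> < x"
  proof (rule ccontr)
    fix x assume "x \<in> T" "\<not> \<theta> < x"
    then have "x \<in> set (filter (\<lambda>t. t \<le> \<theta>) ts)" using ts_set by auto
    then have "filter (\<lambda>t. t \<le> \<theta>) ts \<noteq> []" by (metis empty_iff list.set(1))
    then show False using c\<theta> unfolding c_def by simp
  qed
  have "Iminus_dual e i k = []" using IpIm[OF base] T ts_set by (auto simp: filter_empty_conv)
  moreover have "length (Iplus_dual e i k) = length ts" using IpIm[OF base] T ts_set
    by (simp add: filter_True)
  ultimately have "sigma_dual e i k = Some k'" using ok by (simp add: sigma_dual_def)
  then show ?thesis using iv none unfolding inv_def kt_def by auto
qed



lemma mod_dvd_add: "(e::nat) dvd a \<Longrightarrow> (int a + c) mod int e = c mod int e"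
proof -
  assume "e dvd a"
  then obtain q where "a = e * q" by (auto simp: dvd_def)
  then have "int a + c = c + int e * int q" by simp
  then show ?thesis by (simp only: mod_mult_self2)
qed

lemma dvd_of_mod_eq:
  assumes "(int a - c) mod int e = (int b - c) mod int e" "(e::nat) dvd b"
  shows "e dvd a"
proof -
  have "int e dvd (int a - c) - (int b - c)" using assms(1) by (simp only: mod_eq_dvd_iff)
  then have "int e dvd int a - int b" by simp
  moreover have "int e dvd int b" using assms(2) by simp
  ultimately have "int e dvd (int a - int b) + int b" by (rule dvd_add)
  then have "int e dvd int a" by simp
  then show ?thesis by simp
qed

lemma nonsing_word:
  assumes p: "is_partition k" and x0: "1 \<le> x0" "x0 \<le> length k" and nd: "\<not> e dvd R k x0"
    and above: "\<And>y. x0 < y \<Longrightarrow> e dvd R k y"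
  shows "\<exists>P r G. isig e (int (R k x0) - int x0) k = P @ (False, r) # concat G \<and> (\<forall>w\<in>set G. blk False w)"
proof -
  define j where "j = int (R k x0) - int x0"
  define g where "g = (\<lambda>y. filter (resP e j) (gapE k y))"
  define M where "M = length k + 1"
  have sp: "[0..<M] = [0..<x0] @ x0 # [Suc x0..<M]" using split_upt[of 0 x0 M] x0 by (simp add: M_def)
  have ig: "isig e j k = concat (map g [0..<M])" unfolding g_def M_def by (rule isig_gaps[OF p]) simp
  have mono: "R k (x0 + 1) \<le> R k x0" using part_mono[OF p x0(1), of "x0 + 1"] by simp
  have d1: "e dvd R k (x0 + 1)" using above by simp
  have lt: "R k (x0 + 1) < R k x0" using mono d1 nd by (cases "R k (x0 + 1) = R k x0") auto
  have gx: "g x0 = [(False, (x0, R k x0))]"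
  proof -
    have "gapE k x0 = [(False, (x0, R k x0)), (True, (x0 + 1, R k (x0 + 1) + 1))]"
      using lt x0 by (simp add: gapE_def remE_def addE_def removable_iff addable_iff)
    moreover have "resP e j (False, (x0, R k x0))" by (simp add: resP_def content_def j_def)
    moreover have "\<not> resP e j (True, (x0 + 1, R k (x0 + 1) + 1))"
    proof
      assume "resP e j (True, (x0 + 1, R k (x0 + 1) + 1))"
      then have "(int (R k (x0 + 1)) - int x0) mod int e = (int (R k x0) - int x0) mod int e"
        by (simp add: resP_def content_def j_def)
      then have "e dvd R k x0" using dvd_of_mod_eq[OF _ d1] by metis
      then show False using nd by simp
    qed
    ultimately show ?thesis by (simp add: g_def)
  qed
  have gb: "blk False (g y)" if "x0 < y" for y
  proof -
    have dy: "e dvd R k y" "e dvd R k (y + 1)" using above that by auto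
    have c1: "resP e j (False, (y, R k y)) \<longleftrightarrow> (- int y) mod int e = j mod int e"
      using mod_dvd_add[OF dy(1), of "- int y"] by (simp add: resP_def content_def)
    have c2: "resP e j (True, (y + 1, R k (y + 1) + 1)) \<longleftrightarrow> (- int y) mod int e = j mod int e"
      using mod_dvd_add[OF dy(2), of "- int y"] by (simp add: resP_def content_def)
    show ?thesis
      using c1 c2 that x0 by (auto simp: g_def gapE_def remE_def addE_def removable_iff addable_iff blk_def)
  qed
  show ?thesis
    using ig sp gx gb unfolding j_def[symmetric]
    by (intro exI[of _ "concat (map g [0..<x0])"] exI[of _ "(x0, R k x0)"] exI[of _ "map g [Suc x0..<M]"])
      (simp del: upt_Suc)
qed

lemma exists_max_bad:
  assumes p: "is_partition k" and bad: "\<not> (\<forall>x. e dvd R k x)"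
  shows "\<exists>x0. 1 \<le> x0 \<and> x0 \<le> length k \<and> \<not> e dvd R k x0 \<and> (\<forall>y. x0 < y \<longrightarrow> e dvd R k y)"
proof -
  define S where "S = {x. \<not> e dvd R k x}"
  have Ssub: "S \<subseteq> {1..length k}"
  proof
    fix x assume "x \<in> S"
    then have "R k x \<noteq> 0" by (metis S_def dvd_0_right mem_Collect_eq)
    then show "x \<in> {1..length k}" by (cases "x = 0") (auto simp: rowlen_big[of k x] not_less[symmetric])
  qed
  have fin: "finite S" using Ssub finite_subset by blast
  have ne: "S \<noteq> {}" using bad by (auto simp: S_def)
  define x0 where "x0 = Max S"
  have "x0 \<in> S" unfolding x0_def using fin ne by simp
  moreover have "\<And>y. x0 < y \<Longrightarrow> e dvd R k y"
    using Max_ge[OF fin] unfolding x0_def S_def by fastforce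
  moreover have "x0 \<in> {1..length k}" using Ssub \<open>x0 \<in> S\<close> by blast
  ultimately show ?thesis unfolding S_def by (intro exI[of _ x0]) auto
qed

lemma singular_dvd:
  assumes p: "is_partition k" and s: "singular e k"
  shows "e dvd R k x"
proof (rule ccontr)
  assume "\<not> e dvd R k x"
  then obtain x0 where x0: "1 \<le> x0" "x0 \<le> length k" "\<not> e dvd R k x0" "\<And>y. x0 < y \<Longrightarrow> e dvd R k y"
    using exists_max_bad[OF p] by blast
  obtain P r G where w: "isig e (int (R k x0) - int x0) k = P @ (False, r) # concat G"
    and G: "\<forall>w\<in>set G. blk False w"
    using nonsing_word[OF p x0] by blast
  define i where "i = int (R k x0) - int x0"
  have "red False (isig e i k) = foldl (step False) (red False P @ [(False, r)]) (concat (map id G))"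
    unfolding i_def w by (simp add: red_def step_def)
  also have "\<dots> = red False P @ [(False, r)]"
    by (subst foldl_blocks) (use G in \<open>simp add: concat_map_empty\<close>)
  finally have "(False, r) \<in> set (reduce False (isig e i k))" by (simp add: reduce_red)
  then have "Iminus e i k \<noteq> []" unfolding Iminus_def by (force simp: filter_empty_conv)
  then have "e_op e i k \<noteq> None" by (simp add: e_op_def)
  then show False using s by (simp add: singular_def)
qed

lemma cosingular_dvd:
  assumes p: "is_partition k" and s: "cosingular e k"
  shows "e dvd R (ptranspose k) x"
proof (rule ccontr)
  define kt where "kt = ptranspose k"
  have pt: "is_partition kt" unfolding kt_def by (rule pt_partition)
  assume "\<not> e dvd R (ptranspose k) x"
  then obtain x0 where x0: "1 \<le> x0" "x0 \<le> length kt" "\<not> e dvd R kt x0" "\<And>y. x0 < y \<Longrightarrow> e dvd R kt y"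
    using exists_max_bad[OF pt] unfolding kt_def by blast
  obtain P r G where w: "isig e (int (R kt x0) - int x0) kt = P @ (False, r) # concat G"
    and G: "\<forall>w\<in>set G. blk False w"
    using nonsing_word[OF pt x0] by blast
  define i where "i = - (int (R kt x0) - int x0)"
  have "isig e i k = rev (map swb (isig e (- i) kt))" unfolding kt_def by (rule isig_pt'[OF p])
  also have "\<dots> = concat (map (\<lambda>w. rev (map swb w)) (rev G)) @ (False, swp r) # rev (map swb P)"
    unfolding i_def using w by (simp add: rev_concat rev_map comp_def map_concat)
  finally have iw: "isig e i k = concat (map (\<lambda>w. rev (map swb w)) (rev G)) @ (False, swp r) # rev (map swb P)" .
  have Gt: "\<forall>w\<in>set (rev G). blk True (rev (map swb w))" using G by (auto simp: blk_def)
  have "foldl (step True) [] (concat (map (\<lambda>w. rev (map swb w)) (rev G))) = []"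
  proof -
    have "concat (map (\<lambda>y. if blk True (rev (map swb y)) then [] else rev (map swb y)) (rev G)) = []"
      by (rule concat_map_empty) (use Gt in auto)
    then show ?thesis by (subst foldl_blocks) (simp only: foldl_Nil)
  qed
  then have "red True (isig e i k) = foldl (step True) [(False, swp r)] (rev (map swb P))"
    unfolding iw red_def by (simp add: step_def)
  then have "(False, swp r) \<in> set (reduce True (isig e i k))"
    using persist[of "(False, swp r)" True "[(False, swp r)]"] by (simp add: reduce_red)
  then have "Iminus_dual e i k \<noteq> []" unfolding Iminus_dual_def by (force simp: filter_empty_conv)
  then have "e_dual e i k \<noteq> None" by (simp add: e_dual_def)
  then show False using s by (simp add: cosingular_def)
qed



lemma gapE0: "gapE k 0 = [(True, (1, R k 1 + 1))]"
  by (simp add: gapE_def remE_def addE_def removable_iff addable_iff)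

lemma gapE_pos: "1 \<le> y \<Longrightarrow> gapE k y =
   (if R k (y + 1) < R k y then [(False, (y, R k y)), (True, (y + 1, R k (y + 1) + 1))] else [])"
  by (simp add: gapE_def remE_def addE_def removable_iff addable_iff)

lemma resP_dvd: "resP e i (s, (x, y)) \<longleftrightarrow> int e dvd (int y - int x - i)"
  by (simp add: resP_def content_def mod_eq_dvd_iff)

lemma blk_pair: "(resP e i (False, p) \<longleftrightarrow> resP e i (True, q)) \<Longrightarrow> blk False (filter (resP e i) [(False, p), (True, q)])"
  by (auto simp: blk_def)

lemma no_dvd_succ: "1 < e \<Longrightarrow> int e dvd A \<Longrightarrow> \<not> int e dvd A + 1"
proof
  assume "1 < e" "int e dvd A" "int e dvd A + 1"
  then have "int e dvd (A + 1) - A" using dvd_diff[of "int e" "A + 1" A] by blast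
  then have "int e dvd 1" by simp
  then show False using \<open>1 < e\<close> by simp
qed

definition nuR :: "nat \<Rightarrow> nat \<Rightarrow> nat \<Rightarrow> nat" where
  "nuR d n x = (if x \<le> n then (n - x) div d + 1 else 0)"

definition T1 :: "nat \<Rightarrow> nat \<Rightarrow> nat set" where
  "T1 d n = {t. 1 \<le> t \<and> t \<le> n + 1 \<and> d dvd (n + 1 - t)}"

lemma Suc_div_dvd: "Suc m div d = m div d + (if d dvd Suc m then 1 else 0)"
  by (simp add: div_Suc dvd_eq_mod_eq_0)

lemma nu_step: "nuR d (Suc n) x = nuR d n x + (if x \<in> T1 d n then 1 else 0)" if "1 \<le> x"
proof (cases "x \<le> n")
  case True
  then have "Suc n - x = Suc (n - x)" by simp
  then show ?thesis using True that by (simp add: nuR_def T1_def Suc_div_dvd)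
next
  case False
  then show ?thesis using that by (cases "x = Suc n") (auto simp: nuR_def T1_def)
qed

lemma nu_drop:
  assumes "1 \<le> y"
  shows "nuR d n y = nuR d n (y + 1) + (if y + 1 \<in> T1 d n then 1 else 0)"
proof (cases "y < n")
  case True
  then have "n - y = Suc (n - (y + 1))" by simp
  then show ?thesis using True assms by (simp add: nuR_def T1_def Suc_div_dvd)
next
  case False
  then show ?thesis using assms by (cases "y = n") (auto simp: nuR_def T1_def)
qed

lemma nu_T_val:
  assumes "0 < d" "1 \<le> y" "y + 1 \<in> T1 d n"
  shows "y \<le> n \<and> n = y + nuR d n (y + 1) * d"
proof -
  have yn: "y \<le> n" "d dvd n - y" using assms by (auto simp: T1_def)
  have "nuR d n (y + 1) = (n - y) div d"
  proof (cases "y = n")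
    case True then show ?thesis by (simp add: nuR_def)
  next
    case False
    then have "n - y = Suc (n - (y + 1))" using yn by simp
    then have "(n - y) div d = (n - (y + 1)) div d + 1" using yn(2) by (simp add: Suc_div_dvd)
    then show ?thesis using False yn by (simp add: nuR_def)
  qed
  then show ?thesis using yn by simp
qed

lemma nu1: assumes e: "1 < e" shows "e dvd (nuR (e - 1) n 1 + n) \<longleftrightarrow> (e - 1) dvd n"
proof (cases n)
  case 0 then show ?thesis by (simp add: nuR_def)
next
  case (Suc m)
  define d where "d = e - 1"
  have d: "0 < d" "e = d + 1" using e by (auto simp: d_def)
  define q where "q = m div d"
  define r where "r = m mod d"
  have m: "m = q * d + r" and r: "r < d" using d by (auto simp: q_def r_def)
  have n1: "nuR d n 1 = q + 1" using Suc by (simp add: nuR_def q_def)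
  have "nuR d n 1 + n = (q + 1) + (q * d + r + 1)" using n1 Suc m by simp
  also have "\<dots> = q * e + (r + 2)" using d(2) by (simp add: algebra_simps)
  finally have "nuR d n 1 + n = q * e + (r + 2)" .
  moreover have "e dvd (q * e + (r + 2)) \<longleftrightarrow> e dvd (r + 2)"
    by (rule dvd_add_right_iff) simp
  ultimately have "e dvd (nuR d n 1 + n) \<longleftrightarrow> e dvd (r + 2)" by simp
  also have "\<dots> \<longleftrightarrow> r + 2 = e"
  proof
    assume "e dvd r + 2"
    moreover have "r + 2 \<le> e" "0 < r + 2" using r d by auto
    ultimately show "r + 2 = e" using dvd_imp_le[of e "r + 2"] by simp
  qed simp
  also have "\<dots> \<longleftrightarrow> d dvd n"
  proof -
    have "n = q * d + (r + 1)" using Suc m by simp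
    moreover have "d dvd (q * d + (r + 1)) \<longleftrightarrow> d dvd (r + 1)"
      by (rule dvd_add_right_iff) simp
    ultimately have "d dvd n \<longleftrightarrow> d dvd r + 1" by simp
    also have "\<dots> \<longleftrightarrow> r + 1 = d"
    proof
      assume "d dvd r + 1"
      then show "r + 1 = d" using dvd_imp_le[of d "r + 1"] r by simp
    qed simp
    finally show ?thesis using d by auto
  qed
  finally show ?thesis by (simp add: d_def)
qed

lemma gap1:
  assumes e: "1 < e" and pl: "is_partition l" and dv: "\<And>x. e dvd R l x"
    and rk: "\<And>x. 1 \<le> x \<Longrightarrow> R k x = R l x + nuR (e - 1) n x"
  shows "y + 1 \<in> T1 (e - 1) n \<Longrightarrow> filter (resP e (- int n)) (gapE k y) = [(True, (y + 1, R k (y + 1) + 1))]"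
    and "y + 1 \<notin> T1 (e - 1) n \<Longrightarrow> blk False (filter (resP e (- int n)) (gapE k y))"
proof -
  define d where "d = e - 1"
  have d: "0 < d" "int e = int d + 1" using e by (auto simp: d_def)
  have iff0: "resP e (- int n) (True, (1, R k 1 + 1)) \<longleftrightarrow> 1 \<in> T1 d n"
  proof -
    obtain a where a: "R l 1 = e * a" using dv[of 1] by (auto simp: dvd_def)
    have "resP e (- int n) (True, (1, R k 1 + 1)) \<longleftrightarrow> int e dvd int (e * a + (nuR d n 1 + n))"
      using rk[of 1] a by (simp add: resP_dvd d_def algebra_simps)
    also have "\<dots> \<longleftrightarrow> e dvd (nuR d n 1 + n)" by (simp only: int_dvd_int_iff dvd_add_right_iff dvd_triv_left)
    also have "\<dots> \<longleftrightarrow> 1 \<in> T1 d n" using nu1[OF e, of n] by (simp add: d_def T1_def)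
    finally show ?thesis .
  qed
  show "y + 1 \<in> T1 (e - 1) n \<Longrightarrow> filter (resP e (- int n)) (gapE k y) = [(True, (y + 1, R k (y + 1) + 1))]"
  proof -
    assume yT: "y + 1 \<in> T1 (e - 1) n"
    show ?thesis
    proof (cases "y = 0")
      case True then show ?thesis using yT iff0 by (simp add: gapE0 d_def)
    next
      case False
      then have y: "1 \<le> y" by simp
      have nv: "y \<le> n" "n = y + nuR d n (y + 1) * d" using nu_T_val[OF d(1) y] yT by (auto simp: d_def)
      define j where "j = nuR d n (y + 1)"
      have drop: "nuR d n y = j + 1" using nu_drop[OF y, of d n] yT by (simp add: j_def d_def)
      have ml: "R l (y + 1) \<le> R l y" using part_mono[OF pl y, of "y + 1"] by simp
      have Rk: "R k y = R l y + j + 1" "R k (y + 1) = R l (y + 1) + j"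
        using rk[of y] rk[of "y + 1"] y drop by (auto simp: j_def d_def)
      have lt: "R k (y + 1) < R k y" using Rk ml by simp
      obtain b where b: "R l (y + 1) = e * b" using dv[of "y + 1"] by (auto simp: dvd_def)
      have ni: "int n = int y + int j * int d" using arg_cong[of _ _ int, OF nv(2)] by (simp add: j_def)
      have c2: "int (R k (y + 1) + 1) - int (y + 1) - (- int n) = int e * (int b + int j)"
        unfolding Rk(2) b ni by (simp add: algebra_simps d(2))
      have r2: "resP e (- int n) (True, (y + 1, R k (y + 1) + 1))" unfolding resP_dvd c2 by simp
      have c1: "int (R k y) - int y - (- int n) = (int (R k (y + 1) + 1) - int (y + 1) - (- int n)) + int (R l y - R l (y + 1)) + 1"
        using Rk ml by (simp add: algebra_simps of_nat_diff)
      have "int e dvd int (R l y - R l (y + 1))" using dv[of y] dv[of "y + 1"] by (simp add: dvd_diff_nat)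
      then have "int e dvd (int (R k (y + 1) + 1) - int (y + 1) - (- int n)) + int (R l y - R l (y + 1))"
        using r2 by (simp add: resP_dvd dvd_add)
      then have r1: "\<not> resP e (- int n) (False, (y, R k y))"
        unfolding resP_dvd c1 using no_dvd_succ[OF e] by blast
      show ?thesis using gapE_pos[OF y, of k] lt r1 r2 by simp
    qed
  qed
  show "y + 1 \<notin> T1 (e - 1) n \<Longrightarrow> blk False (filter (resP e (- int n)) (gapE k y))"
  proof -
    assume yT: "y + 1 \<notin> T1 (e - 1) n"
    show ?thesis
    proof (cases "y = 0")
      case True then show ?thesis using yT iff0 by (simp add: gapE0 d_def blk_def)
    next
      case False
      then have y: "1 \<le> y" by simp
      have drop: "nuR d n y = nuR d n (y + 1)" using nu_drop[OF y, of d n] yT by (simp add: d_def)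
      have ml: "R l (y + 1) \<le> R l y" using part_mono[OF pl y, of "y + 1"] by simp
      have c1: "int (R k y) - int y - (- int n) = (int (R k (y + 1) + 1) - int (y + 1) - (- int n)) + int (R l y - R l (y + 1))"
        using rk[of y] rk[of "y + 1"] y drop ml by (simp add: algebra_simps of_nat_diff d_def)
      have dd: "int e dvd int (R l y - R l (y + 1))" using dv[of y] dv[of "y + 1"] by (simp add: dvd_diff_nat)
      have "resP e (- int n) (False, (y, R k y)) \<longleftrightarrow> resP e (- int n) (True, (y + 1, R k (y + 1) + 1))"
        unfolding resP_dvd c1 using dd by (simp add: dvd_add_left_iff)
      then show ?thesis using gapE_pos[OF y, of k] blk_pair by (simp add: blk_def)
    qed
  qed
qed



definition T2 :: "nat \<Rightarrow> nat \<Rightarrow> nat set" where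
  "T2 d k = {t. 1 \<le> t \<and> (t - 1) * d \<le> k}"

lemma no_dvd_pred: "1 < e \<Longrightarrow> int e dvd A + 1 \<Longrightarrow> \<not> int e dvd A"
  using no_dvd_succ by blast

lemma gap2:
  assumes e: "1 < e" and pl: "is_partition l" and dv: "\<And>x. e dvd R l x"
    and rk: "\<And>x. 1 \<le> x \<Longrightarrow> R k x = R l x + (m - (x - 1) * (e - 1))"
  shows "y + 1 \<in> T2 (e - 1) m \<Longrightarrow> filter (resP e (int m)) (gapE k y) = [(True, (y + 1, R k (y + 1) + 1))]"
    and "y + 1 \<notin> T2 (e - 1) m \<Longrightarrow> blk False (filter (resP e (int m)) (gapE k y))"
proof -
  define d where "d = e - 1"
  have d: "0 < d" "int e = int d + 1" "e = d + 1" using e by (auto simp: d_def)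
  have r0: "resP e (int m) (True, (1, R k 1 + 1))"
  proof -
    obtain a where a: "R l 1 = e * a" using dv[of 1] by (auto simp: dvd_def)
    have "int (R k 1 + 1) - int 1 - int m = int e * int a" using rk[of 1] a by simp
    then show ?thesis unfolding resP_dvd by simp
  qed
  have one: "1 \<in> T2 d m" by (simp add: T2_def)
  show "y + 1 \<in> T2 (e - 1) m \<Longrightarrow> filter (resP e (int m)) (gapE k y) = [(True, (y + 1, R k (y + 1) + 1))]"
  proof -
    assume yT: "y + 1 \<in> T2 (e - 1) m"
    show ?thesis
    proof (cases "y = 0")
      case True then show ?thesis using r0 by (simp add: gapE0)
    next
      case False
      then have y: "1 \<le> y" by simp
      have yd: "y * d \<le> m" using yT by (simp add: T2_def d_def)
      obtain a where a: "R l y = e * a" using dv[of y] by (auto simp: dvd_def)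
      obtain b where b: "R l (y + 1) = e * b" using dv[of "y + 1"] by (auto simp: dvd_def)
      have ml: "R l (y + 1) \<le> R l y" using part_mono[OF pl y, of "y + 1"] by simp
      have vy: "m - (y - 1) * d = (m - y * d) + d" using yd y
        by (cases y) (auto simp: algebra_simps)
      have Rk: "R k y = R l y + (m - y * d) + d" "R k (y + 1) = R l (y + 1) + (m - y * d)"
        using rk[of y] rk[of "y + 1"] y vy by (auto simp: d_def)
      have lt: "R k (y + 1) < R k y" using Rk ml d by simp
      have mi: "int (m - y * d) = int m - int y * int d" using yd by (simp add: of_nat_diff)
      have c2: "int (R k (y + 1) + 1) - int (y + 1) - int m = int e * (int b - int y)"
        unfolding Rk(2) b using mi by (simp add: algebra_simps d(2))
      have r2: "resP e (int m) (True, (y + 1, R k (y + 1) + 1))" unfolding resP_dvd c2 by simp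
      have c1: "(int (R k y) - int y - int m) + 1 = int e * (int a - int y + 1)"
        unfolding Rk(1) a using mi by (simp add: algebra_simps d(2))
      have r1: "\<not> resP e (int m) (False, (y, R k y))"
        unfolding resP_dvd using no_dvd_pred[OF e] c1 by (metis dvd_triv_left)
      show ?thesis using gapE_pos[OF y, of k] lt r1 r2 by simp
    qed
  qed
  show "y + 1 \<notin> T2 (e - 1) m \<Longrightarrow> blk False (filter (resP e (int m)) (gapE k y))"
  proof -
    assume yT: "y + 1 \<notin> T2 (e - 1) m"
    have "y \<noteq> 0" using yT one by (metis add_0 d_def)
    then have y: "1 \<le> y" by simp
    have yd: "m < y * d" using yT y by (auto simp: T2_def d_def not_le)
    obtain a where a: "R l y = e * a" using dv[of y] by (auto simp: dvd_def)
    obtain b where b: "R l (y + 1) = e * b" using dv[of "y + 1"] by (auto simp: dvd_def)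
    have ml: "R l (y + 1) \<le> R l y" using part_mono[OF pl y, of "y + 1"] by simp
    have Rk1: "R k (y + 1) = R l (y + 1)" using rk[of "y + 1"] yd by (simp add: d_def)
    show ?thesis
    proof (cases "m \<le> (y - 1) * d")
      case True
      have Rk: "R k y = R l y" using rk[of y] y True by (simp add: d_def)
      have c1: "int (R k y) - int y - int m = (int (R k (y + 1) + 1) - int (y + 1) - int m) + int e * (int a - int b)"
        unfolding Rk Rk1 a b by (simp add: algebra_simps)
      have "resP e (int m) (False, (y, R k y)) \<longleftrightarrow> resP e (int m) (True, (y + 1, R k (y + 1) + 1))"
        unfolding resP_dvd c1 by (simp add: dvd_add_left_iff)
      then show ?thesis using gapE_pos[OF y, of k] blk_pair by (simp add: blk_def)
    next
      case False
      define w where "w = m - (y - 1) * d"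
      have w: "1 \<le> w" "w < d" "m = (y - 1) * d + w" using False yd y
        by (auto simp: w_def) (cases y; simp add: algebra_simps)
      have Rk: "R k y = R l y + w" using rk[of y] y by (simp add: d_def w_def)
      have lt: "R k (y + 1) < R k y" using Rk Rk1 ml w by simp
      obtain y' where y': "y = Suc y'" using y by (cases y) auto
      have "m = y' * d + w" using w(3) y' by simp
      then have "int m = int y' * int d + int w" by simp
      then have mi: "int m = (int y - 1) * int d + int w" using y' by simp
      have c1: "(int (R k y) - int y - int m) + 1 = int e * (int a - int y + 1)"
        unfolding Rk a mi by (simp add: algebra_simps d(2))
      have r1: "\<not> resP e (int m) (False, (y, R k y))"
        unfolding resP_dvd using no_dvd_pred[OF e] c1 by (metis dvd_triv_left)
      have r2: "\<not> resP e (int m) (True, (y + 1, R k (y + 1) + 1))"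
      proof
        assume "resP e (int m) (True, (y + 1, R k (y + 1) + 1))"
        then have h: "int e dvd int (R k (y + 1) + 1) - int (y + 1) - int m" by (simp add: resP_dvd)
        have "int (R k (y + 1) + 1) - int (y + 1) - int m = int e * (int b - int y + 1) - int (w + 1)"
          unfolding Rk1 b mi by (simp add: algebra_simps d(2))
        then have A: "int e dvd int e * (int b - int y + 1) - int (w + 1)" using h by simp
        have "int e dvd int e * (int b - int y + 1) - (int e * (int b - int y + 1) - int (w + 1))"
          by (rule dvd_diff) (simp, rule A)
        then have "int e dvd int (w + 1)" by simp
        then have "e dvd w + 1" by (simp only: int_dvd_int_iff)
        then have "e \<le> w + 1" by (rule dvd_imp_le) simp
        then show False using w d by simp
      qed
      show ?thesis using gapE_pos[OF y, of k] lt r1 r2 by (simp add: blk_def)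
    qed
  qed
qed



lemma length_padd: "length (padd a b) = max (length a) (length b)"
  by (simp add: padd_def del: upt_Suc)

lemma rowlen_padd: "1 \<le> x \<Longrightarrow> R (padd a b) x = R a x + R b x"
proof -
  assume x: "1 \<le> x"
  show ?thesis
  proof (cases "x \<le> max (length a) (length b)")
    case True
    then have "[1..<max (length a) (length b) + 1] ! (x - 1) = x" using x by (simp add: nth_upt del: upt_Suc)
    then show ?thesis using x True unfolding rowlen_def padd_def by (simp del: upt_Suc)
  next
    case False
    have "R a x = 0" "R b x = 0" using False by (simp_all add: rowlen_big)
    moreover have "R (padd a b) x = 0" by (rule rowlen_big) (use False in \<open>simp add: length_padd not_le\<close>)
    ultimately show ?thesis by simp
  qed
qed

lemma padd_partition:
  assumes "is_partition a" "is_partition b" shows "is_partition (padd a b)"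
proof (rule part_intro)
  fix x :: nat assume x: "1 \<le> x"
  show "R (padd a b) (x + 1) \<le> R (padd a b) x"
    using x part_mono[OF assms(1) x, of "x + 1"] part_mono[OF assms(2) x, of "x + 1"] by (simp add: rowlen_padd)
next
  fix x :: nat assume x: "1 \<le> x" "x \<le> length (padd a b)"
  then have "x \<le> length a \<or> x \<le> length b" by (auto simp: length_padd)
  then show "0 < R (padd a b) x" using part_pos[OF assms(1) x(1)] part_pos[OF assms(2) x(1)] x(1)
    by (auto simp: rowlen_padd)
qed

lemma sub_swap2: "1 \<le> (x::nat) \<Longrightarrow> x \<le> n - A \<Longrightarrow> A \<le> n - x" by arith

lemma nu_row:
  assumes e: "1 < e" and x: "1 \<le> x"
  shows "R (nu e n) x = nuR (e - 1) n x"
proof -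
  define d where "d = e - 1"
  have d: "0 < d" using e by (simp add: d_def)
  define f where "f = (\<lambda>k. n - k * d)"
  have "R (nu e n) x = length (filter (\<lambda>v. x \<le> v) (filter (\<lambda>v. 0 < v) (map f [0..<n])))"
    unfolding nu_def using x by (simp add: rowlen_pt f_def d_def)
  also have "\<dots> = length (filter (\<lambda>k. x \<le> f k) [0..<n])"
  proof -
    have "filter (\<lambda>v. x \<le> v) (filter (\<lambda>v. 0 < v) (map f [0..<n])) = filter (\<lambda>v. x \<le> v) (map f [0..<n])"
      unfolding filter_filter by (rule filter_cong) (use x in auto)
    then show ?thesis by (simp add: filter_map comp_def del: upt_Suc)
  qed
  also have "\<dots> = card {k. k < n \<and> x \<le> f k}"
  proof -
    have "{i. i < length [0..<n] \<and> x \<le> f ([0..<n] ! i)} = {k. k < n \<and> x \<le> f k}" by auto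
    then show ?thesis by (simp only: length_filter_conv_card)
  qed
  also have "\<dots> = nuR d n x"
  proof (cases "x \<le> n")
    case True
    have "{k. k < n \<and> x \<le> f k} = {..(n - x) div d}"
    proof (rule set_eqI, rule iffI)
      fix k assume "k \<in> {k. k < n \<and> x \<le> f k}"
      then have "x \<le> n - k * d" by (auto simp: f_def)
      then have "k * d \<le> n - x" using x sub_swap2 by blast
      then show "k \<in> {..(n - x) div d}" using less_eq_div_iff_mult_less_eq[OF d] by simp
    next
      fix k assume "k \<in> {..(n - x) div d}"
      then have kd: "k * d \<le> n - x" using less_eq_div_iff_mult_less_eq[OF d] by simp
      moreover have "k \<le> k * d" using d by simp
      ultimately have "k < n" using x True by arith
      moreover have "x \<le> f k" using kd x True unfolding f_def by arith
      ultimately show "k \<in> {k. k < n \<and> x \<le> f k}" by simp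
    qed
    then show ?thesis using True by (simp add: nuR_def)
  next
    case False
    then have "{k. k < n \<and> x \<le> f k} = {}" by (auto simp: f_def)
    then show ?thesis using False by (simp add: nuR_def)
  qed
  finally show ?thesis by (simp add: d_def)
qed

lemma sub_swap: "(z::nat) \<le> n \<Longrightarrow> 1 \<le> z \<Longrightarrow> (A \<le> n - z) = (z \<le> n - A)" by arith

lemma nut_row:
  assumes e: "1 < e" and x: "1 \<le> x"
  shows "R (ptranspose (nu e n)) x = n - (x - 1) * (e - 1)"
proof -
  define d where "d = e - 1"
  have d: "0 < d" using e by (simp add: d_def)
  have "R (ptranspose (nu e n)) x = card {z. 1 \<le> z \<and> x \<le> R (nu e n) z}"
    unfolding nu_def by (rule rowlen_pt_card[OF pt_partition x])
  also have "{z. 1 \<le> z \<and> x \<le> R (nu e n) z} = {1..n - (x - 1) * d}"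
  proof (rule set_eqI)
    fix z
    show "z \<in> {z. 1 \<le> z \<and> x \<le> R (nu e n) z} \<longleftrightarrow> z \<in> {1..n - (x - 1) * d}"
    proof (cases "1 \<le> z")
      case True
      have "x \<le> R (nu e n) z \<longleftrightarrow> z \<le> n - (x - 1) * d"
      proof (cases "z \<le> n")
        case True
        have "x \<le> (n - z) div d + 1 \<longleftrightarrow> x - 1 \<le> (n - z) div d" using x by arith
        also have "\<dots> \<longleftrightarrow> (x - 1) * d \<le> n - z" by (rule less_eq_div_iff_mult_less_eq[OF d])
        also have "\<dots> \<longleftrightarrow> z \<le> n - (x - 1) * d" using sub_swap[OF True \<open>1 \<le> z\<close>] .
        finally show ?thesis using nu_row[OF e \<open>1 \<le> z\<close>] True by (simp add: nuR_def d_def)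
      next
        case False
        then show ?thesis using nu_row[OF e \<open>1 \<le> z\<close>] x by (simp add: nuR_def d_def)
      qed
      then show ?thesis using True by simp
    next
      case False then show ?thesis by simp
    qed
  qed
  finally show ?thesis by (simp add: d_def)
qed

lemma C0_Suc: "C0 e (Suc m) l = Option.bind (C0 e m l) (sigma e (- int m))"
  by (simp add: C0_def)

lemma C0_dual_Suc: "C0_dual e (Suc m) l = Option.bind (C0_dual e m l) (sigma_dual e (- int m))"
  by (simp add: C0_dual_def)

lemma C0_sing:
  assumes e: "1 < e" and pl: "is_partition l" and dv: "\<And>x. e dvd R l x"
  shows "\<exists>k. C0 e m l = Some k \<and> is_partition k \<and> (\<forall>x. 1 \<le> x \<longrightarrow> R k x = R l x + nuR (e - 1) m x)"
proof (induction m)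
  case 0 then show ?case using pl by (simp add: C0_def nuR_def)
next
  case (Suc m)
  then obtain k where C: "C0 e m l = Some k" and pk: "is_partition k" and rk: "\<And>x. 1 \<le> x \<Longrightarrow> R k x = R l x + nuR (e - 1) m x"
    by blast
  define M where "M = length k + m + 2"
  have "\<exists>k'. sigma e (- int m) k = Some k' \<and> is_partition k' \<and> (\<forall>x. R k' x = R k x + (if x \<in> T1 (e - 1) m then 1 else 0))"
  proof (rule sigma_run[OF pk e])
    show "length k + 1 \<le> M" by (simp add: M_def)
    show "\<And>t. t \<in> T1 (e - 1) m \<Longrightarrow> 1 \<le> t \<and> t \<le> M" by (auto simp: T1_def M_def)
    show "\<And>y. y < M \<Longrightarrow> y + 1 \<in> T1 (e - 1) m \<Longrightarrow> filter (resP e (- int m)) (gapE k y) = [(True, (y + 1, R k (y + 1) + 1))]"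
      using gap1(1)[OF e pl dv rk] by blast
    show "\<And>y. y < M \<Longrightarrow> y + 1 \<notin> T1 (e - 1) m \<Longrightarrow> blk False (filter (resP e (- int m)) (gapE k y))"
      using gap1(2)[OF e pl dv rk] by blast
  qed
  then obtain k' where s: "sigma e (- int m) k = Some k'" and pk': "is_partition k'"
    and rk': "\<And>x. R k' x = R k x + (if x \<in> T1 (e - 1) m then 1 else 0)" by blast
  have "\<forall>x. 1 \<le> x \<longrightarrow> R k' x = R l x + nuR (e - 1) (Suc m) x"
    using rk' rk nu_step by simp
  then show ?case using C s pk' by (simp add: C0_Suc)
qed

lemma C0_cosing:
  assumes e: "1 < e" and pl: "is_partition mu" and dv: "\<And>x. e dvd R (ptranspose mu) x"
  shows "\<exists>k. C0_dual e m mu = Some k \<and> is_partition k \<and>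
     (\<forall>x. 1 \<le> x \<longrightarrow> R (ptranspose k) x = R (ptranspose mu) x + (m - (x - 1) * (e - 1)))"
proof (induction m)
  case 0 then show ?case using pl by (simp add: C0_dual_def)
next
  case (Suc m)
  then obtain k where C: "C0_dual e m mu = Some k" and pk: "is_partition k"
    and rk: "\<And>x. 1 \<le> x \<Longrightarrow> R (ptranspose k) x = R (ptranspose mu) x + (m - (x - 1) * (e - 1))"
    by blast
  define M where "M = length (ptranspose k) + m + 2"
  have ptm: "is_partition (ptranspose mu)" by (rule pt_partition)
  have "\<exists>k'. sigma_dual e (- int m) k = Some k' \<and> is_partition k' \<and>
      (\<forall>x. R (ptranspose k') x = R (ptranspose k) x + (if x \<in> T2 (e - 1) m then 1 else 0))"
  proof (rule sigma_dual_run[OF pk e])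
    show "length (ptranspose k) + 1 \<le> M" by (simp add: M_def)
    show "\<And>t. t \<in> T2 (e - 1) m \<Longrightarrow> 1 \<le> t \<and> t \<le> M"
    proof -
      fix t assume "t \<in> T2 (e - 1) m"
      then have "1 \<le> t" "(t - 1) * (e - 1) \<le> m" by (auto simp: T2_def)
      moreover have "t - 1 \<le> (t - 1) * (e - 1)"
      proof -
        have "1 \<le> e - 1" using e by linarith
        then have "(t - 1) * 1 \<le> (t - 1) * (e - 1)" by (rule mult_le_mono2)
        then show ?thesis by simp
      qed
      ultimately have "t - 1 \<le> m" by linarith
      then show "1 \<le> t \<and> t \<le> M" using \<open>1 \<le> t\<close> by (simp add: M_def)
    qed
    show "\<And>y. y < M \<Longrightarrow> y + 1 \<in> T2 (e - 1) m \<Longrightarrow> filter (resP e (- (- int m))) (gapE (ptranspose k) y) = [(True, (y + 1, R (ptranspose k) (y + 1) + 1))]"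
      using gap2(1)[OF e ptm dv rk] by simp
    show "\<And>y. y < M \<Longrightarrow> y + 1 \<notin> T2 (e - 1) m \<Longrightarrow> blk False (filter (resP e (- (- int m))) (gapE (ptranspose k) y))"
      using gap2(2)[OF e ptm dv rk] by simp
  qed
  then obtain k' where s: "sigma_dual e (- int m) k = Some k'" and pk': "is_partition k'"
    and rk': "\<And>x. R (ptranspose k') x = R (ptranspose k) x + (if x \<in> T2 (e - 1) m then 1 else 0)" by blast
  have "\<forall>x. 1 \<le> x \<longrightarrow> R (ptranspose k') x = R (ptranspose mu) x + (Suc m - (x - 1) * (e - 1))"
  proof (intro allI impI)
    fix x :: nat assume x: "1 \<le> x"
    show "R (ptranspose k') x = R (ptranspose mu) x + (Suc m - (x - 1) * (e - 1))"
    proof (cases "(x - 1) * (e - 1) \<le> m")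
      case True
      then have "x \<in> T2 (e - 1) m" using x by (simp add: T2_def)
      moreover have "Suc m - (x - 1) * (e - 1) = (m - (x - 1) * (e - 1)) + 1" using True by simp
      ultimately show ?thesis using rk'[of x] rk[OF x] by simp
    next
      case False
      then have "x \<notin> T2 (e - 1) m" by (simp add: T2_def)
      moreover have "Suc m - (x - 1) * (e - 1) = 0" "m - (x - 1) * (e - 1) = 0" using False by simp_all
      ultimately show ?thesis using rk'[of x] rk[OF x] by simp
    qed
  qed
  then show ?case using C s pk' by (simp add: C0_dual_Suc)
qed

theorem corollary6p11:
  fixes e n :: nat
  assumes "e > 1" and "n \<ge> 1"
  shows "(\<forall>lam. is_partition lam \<and> singular e lam \<longrightarrow> C0 e n lam = Some (padd lam (nu e n)))
       \<and> (\<forall>mu. is_partition mu \<and> cosingular e mu \<longrightarrow>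
              C0_dual e n mu = Some (ptranspose (padd (ptranspose mu) (ptranspose (nu e n)))))"
proof (intro conjI allI impI)
  fix lam assume h: "is_partition lam \<and> singular e lam"
  then have pl: "is_partition lam" and dv: "\<And>x. e dvd R lam x" using singular_dvd by blast+
  obtain k where C: "C0 e n lam = Some k" and pk: "is_partition k"
    and rk: "\<And>x. 1 \<le> x \<Longrightarrow> R k x = R lam x + nuR (e - 1) n x"
    using C0_sing[OF assms(1) pl dv] by blast
  have pn: "is_partition (nu e n)" unfolding nu_def by (rule pt_partition)
  have "k = padd lam (nu e n)"
    by (rule part_eq[OF pk padd_partition[OF pl pn]])
      (simp add: rk rowlen_padd nu_row[OF assms(1)])
  then show "C0 e n lam = Some (padd lam (nu e n))" using C by simp
next
  fix mu assume h: "is_partition mu \<and> cosingular e mu"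
  then have pm: "is_partition mu" and dv: "\<And>x. e dvd R (ptranspose mu) x" using cosingular_dvd by blast+
  obtain k where C: "C0_dual e n mu = Some k" and pk: "is_partition k"
    and rk: "\<And>x. 1 \<le> x \<Longrightarrow> R (ptranspose k) x = R (ptranspose mu) x + (n - (x - 1) * (e - 1))"
    using C0_cosing[OF assms(1) pm dv] by blast
  have "ptranspose k = padd (ptranspose mu) (ptranspose (nu e n))"
    by (rule part_eq[OF pt_partition padd_partition[OF pt_partition pt_partition]])
      (simp add: rk rowlen_padd nut_row[OF assms(1)])
  then have "ptranspose (ptranspose k) = ptranspose (padd (ptranspose mu) (ptranspose (nu e n)))" by simp
  then have "k = ptranspose (padd (ptranspose mu) (ptranspose (nu e n)))"
    by (simp only: pt_pt[OF pk])
  then show "C0_dual e n mu = Some (ptranspose (padd (ptranspose mu) (ptranspose (nu e n))))" using C by simp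
qed

end
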